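(* Let $\omega\in\Omega$ and let $C_\infty$ be an infinite contour of $\phi(\omega)$. Let $G\setminus C_\infty$ be the graph obtained from $G$ by removing all edges of $G$ crossed by edges of $C_\infty$. Then each infinite connected component of $G\setminus C_\infty$ contains an infinite cluster of $\omega$ that is incident to $C_\infty$.
   Context: Let $G$ be the square grid with vertex set $\mathbb{Z}^2$ and nearest-neighbour edges (unit segments). The face of $G$ with lower-left corner $(m,n)$ is black if $m+n$ is even, white otherwise. $\Omega\subset\{0,1\}^{\mathbb{Z}^2}$ is the set of $\omega$ such that for every black face the states of its four vertices, listed clockwise from the lower-left corner, form one of $0000,1111,0011,1100,0110,1001$. A cluster of $\omega$ is a maximal $G$-connected set of vertices on which $\omega$ is constant, infinite if it has infinitely many vertices. Let $\mathbb{L}_1$ have vertices $(m-\tfrac12,n+\tfrac12)$, $m,n$ both even, and $\mathbb{L}_2$ vertices $(m-\tfrac12,n+\tfrac12)$, $m,n$ both odd; in each, two vertices are joined by an edge (a closed segment of length $2$) iff at Euclidean distance $2$. The center of each black face $F$ is the midpoint of exactly one edge $e_1$ of $\mathbb{L}_1$ and one edge $e_2$ of $\mathbb{L}_2$. Define $\phi(\omega)\in\{0,1\}^{E(\mathbb{L}_1)\cup E(\mathbb{L}_2)}$: if the configuration around $F$ is $0000$ or $1111$ both get $0$; if the two upper vertices share a state different from the two lower ones, the horizontal one of $e_1,e_2$ gets $1$, the vertical $0$; if the two left vertices share a state different from the two right ones, the vertical one gets $1$, the horizontal $0$. Edges with value $1$ are present; a contour is a connected component of the set of present edges, infinite if it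 has infinitely many edges. A cluster is incident to a contour if some vertex of the cluster is at Euclidean distance $\tfrac12$ from some edge (segment) of the contour. *)

theory Defs
  imports "HOL-Analysis.Analysis"
begin

text \<open>Configurations: \<open>\<omega> v = True\<close> encodes state 1, \<open>False\<close> encodes state 0.
  Vertices of G are integer pairs; they sit at the point gpt v in the plane.\<close>

definition gpt :: "int \<times> int \<Rightarrow> real \<times> real" where
  "gpt v = (of_int (fst v), of_int (snd v))"

definition G_edge :: "(int \<times> int) set \<Rightarrow> bool" where
  "G_edge e \<longleftrightarrow> (\<exists>u v. e = {u, v} \<and> dist (gpt u) (gpt v) = 1)"

definition gseg :: "(int \<times> int) set \<Rightarrow> (real \<times> real) set" where
  "gseg e = convex hull (gpt ` e)"

text \<open>Black faces: lower-left corner (m,n) with m+n even.\<close>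
definition black :: "int \<Rightarrow> int \<Rightarrow> bool" where
  "black m n \<longleftrightarrow> even (m + n)"

definition Omega :: "(int \<times> int \<Rightarrow> bool) set" where
  "Omega = {\<omega>. \<forall>m n. black m n \<longrightarrow>
      (\<omega> (m, n), \<omega> (m, n + 1), \<omega> (m + 1, n + 1), \<omega> (m + 1, n)) \<in>
        {(False, False, False, False), (True, True, True, True),
         (False, False, True, True), (True, True, False, False),
         (False, True, True, False), (True, False, False, True)}}"

definition dpt :: "int \<times> int \<Rightarrow> real \<times> real" where
  "dpt p = (of_int (fst p) - 1/2, of_int (snd p) + 1/2)"

definition L1_vert :: "int \<times> int \<Rightarrow> bool" where
  "L1_vert p \<longleftrightarrow> even (fst p) \<and> even (snd p)"

definition L2_vert :: "int \<times> int \<Rightarrow> bool" where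
  "L2_vert p \<longleftrightarrow> odd (fst p) \<and> odd (snd p)"

definition L1_edge :: "(int \<times> int) set \<Rightarrow> bool" where
  "L1_edge e \<longleftrightarrow> (\<exists>p q. e = {p, q} \<and> L1_vert p \<and> L1_vert q \<and> dist (dpt p) (dpt q) = 2)"

definition L2_edge :: "(int \<times> int) set \<Rightarrow> bool" where
  "L2_edge e \<longleftrightarrow> (\<exists>p q. e = {p, q} \<and> L2_vert p \<and> L2_vert q \<and> dist (dpt p) (dpt q) = 2)"

definition dual_edge :: "(int \<times> int) set \<Rightarrow> bool" where
  "dual_edge e \<longleftrightarrow> L1_edge e \<or> L2_edge e"

definition dseg :: "(int \<times> int) set \<Rightarrow> (real \<times> real) set" where
  "dseg e = convex hull (dpt ` e)"

definition phi :: "(int \<times> int \<Rightarrow> bool) \<Rightarrow> (int \<times> int) set \<Rightarrow> bool" where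
  "phi \<omega> e \<longleftrightarrow> dual_edge e \<and>
     (\<exists>p q m n. e = {p, q} \<and> black m n \<and>
        midpoint (dpt p) (dpt q) = (of_int m + 1/2, of_int n + 1/2) \<and>
        ((snd p = snd q \<and> \<omega> (m, n + 1) = \<omega> (m + 1, n + 1) \<and> \<omega> (m, n) = \<omega> (m + 1, n)
            \<and> \<omega> (m, n + 1) \<noteq> \<omega> (m, n)) \<or>
         (fst p = fst q \<and> \<omega> (m, n) = \<omega> (m, n + 1) \<and> \<omega> (m + 1, n) = \<omega> (m + 1, n + 1)
            \<and> \<omega> (m, n) \<noteq> \<omega> (m + 1, n))))"

definition dual_adj :: "(int \<times> int \<Rightarrow> bool) \<Rightarrow> (int \<times> int) set \<Rightarrow> (int \<times> int) set \<Rightarrow> bool" where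
  "dual_adj \<omega> e f \<longleftrightarrow> phi \<omega> e \<and> phi \<omega> f \<and> e \<inter> f \<noteq> {}"

definition is_contour :: "(int \<times> int \<Rightarrow> bool) \<Rightarrow> (int \<times> int) set set \<Rightarrow> bool" where
  "is_contour \<omega> C \<longleftrightarrow> (\<exists>e. phi \<omega> e \<and> C = {f. (dual_adj \<omega>)\<^sup>*\<^sup>* e f})"

definition same_adj :: "(int \<times> int \<Rightarrow> bool) \<Rightarrow> int \<times> int \<Rightarrow> int \<times> int \<Rightarrow> bool" where
  "same_adj \<omega> u v \<longleftrightarrow> G_edge {u, v} \<and> \<omega> u = \<omega> v"

definition is_cluster :: "(int \<times> int \<Rightarrow> bool) \<Rightarrow> (int \<times> int) set \<Rightarrow> bool" where
  "is_cluster \<omega> K \<longleftrightarrow> (\<exists>v. K = {w. (same_adj \<omega>)\<^sup>*\<^sup>* v w})"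

definition GC_adj :: "(int \<times> int) set set \<Rightarrow> int \<times> int \<Rightarrow> int \<times> int \<Rightarrow> bool" where
  "GC_adj C u v \<longleftrightarrow> G_edge {u, v} \<and> (\<forall>f\<in>C. gseg {u, v} \<inter> dseg f = {})"

definition is_GC_component :: "(int \<times> int) set set \<Rightarrow> (int \<times> int) set \<Rightarrow> bool" where
  "is_GC_component C K \<longleftrightarrow> (\<exists>v. K = {w. (GC_adj C)\<^sup>*\<^sup>* v w})"

definition incident :: "(int \<times> int) set \<Rightarrow> (int \<times> int) set set \<Rightarrow> bool" where
  "incident K C \<longleftrightarrow> (\<exists>v\<in>K. \<exists>f\<in>C. infdist (gpt v) (dseg f) = 1/2)"

end

theory Submission
  imports Defs
begin


type_synonym pt = "int \<times> int"

definition adj :: "pt \<Rightarrow> pt \<Rightarrow> bool" where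
  "adj u v \<longleftrightarrow> (fst u = fst v \<and> \<bar>snd u - snd v\<bar> = 1) \<or> (snd u = snd v \<and> \<bar>fst u - fst v\<bar> = 1)"

definition Hor :: "int \<Rightarrow> int \<Rightarrow> pt set" where "Hor a b = {(a,b),(a+1,b)}"
definition Ver :: "int \<Rightarrow> int \<Rightarrow> pt set" where "Ver a b = {(a,b),(a,b+1)}"
definition sides :: "int \<Rightarrow> int \<Rightarrow> pt set set" where
  "sides m n = {Hor m n, Hor m (n+1), Ver m n, Ver (m+1) n}"

definition face_even :: "pt set set \<Rightarrow> bool" where
  "face_even E \<longleftrightarrow> (\<forall>m n. ((Hor m n \<in> E) = (Hor m (n+1) \<in> E)) = ((Ver m n \<in> E) = (Ver (m+1) n \<in> E)))"

definition cntc :: "pt set set \<Rightarrow> int \<Rightarrow> int \<Rightarrow> bool" where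
  "cntc E a b = (odd (card {j. 0 \<le> j \<and> j < b \<and> Ver a j \<in> E}) \<noteq> odd (card {j. b \<le> j \<and> j < 0 \<and> Ver a j \<in> E}))"
definition cntr :: "pt set set \<Rightarrow> int \<Rightarrow> bool" where
  "cntr E a = (odd (card {i. 0 \<le> i \<and> i < a \<and> Hor i 0 \<in> E}) \<noteq> odd (card {i. a \<le> i \<and> i < 0 \<and> Hor i 0 \<in> E}))"
definition cob :: "pt set set \<Rightarrow> pt \<Rightarrow> bool" where
  "cob E v = (cntr E (fst v) \<noteq> cntc E (fst v) (snd v))"

lemma cnt_step_gen:
  fixes P :: "int \<Rightarrow> bool"
  shows "(odd (card {j. 0 \<le> j \<and> j < b+1 \<and> P j}) \<noteq> odd (card {j. b+1 \<le> j \<and> j < 0 \<and> P j}))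
       = ((odd (card {j. 0 \<le> j \<and> j < b \<and> P j}) \<noteq> odd (card {j. b \<le> j \<and> j < 0 \<and> P j})) \<noteq> P b)"
proof (cases "0 \<le> b")
  case True
  have f: "finite {j. 0 \<le> j \<and> j < b \<and> P j}" by (rule finite_subset[of _ "{0..<b}"]) auto
  have e1: "{j. b+1 \<le> j \<and> j < 0 \<and> P j} = {}" "{j. b \<le> j \<and> j < 0 \<and> P j} = {}" using True by auto
  show ?thesis
  proof (cases "P b")
    case True
    have "{j. 0 \<le> j \<and> j < b+1 \<and> P j} = insert b {j. 0 \<le> j \<and> j < b \<and> P j}" using True \<open>0 \<le> b\<close> by auto
    then show ?thesis unfolding e1 using f True by simp
  next
    case False
    have "{j. 0 \<le> j \<and> j < b+1 \<and> P j} = {j. 0 \<le> j \<and> j < b \<and> P j}" using False by (auto, smt)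
    then show ?thesis unfolding e1 using False by simp
  qed
next
  case False
  have f: "finite {j. b+1 \<le> j \<and> j < 0 \<and> P j}" by (rule finite_subset[of _ "{b+1..<0}"]) auto
  have e1: "{j. 0 \<le> j \<and> j < b+1 \<and> P j} = {}" "{j. 0 \<le> j \<and> j < b \<and> P j} = {}" using False by auto
  show ?thesis
  proof (cases "P b")
    case True
    have "{j. b \<le> j \<and> j < 0 \<and> P j} = insert b {j. b+1 \<le> j \<and> j < 0 \<and> P j}" using True False by auto
    then show ?thesis unfolding e1 using f True by simp
  next
    case F2: False
    have "{j. b \<le> j \<and> j < 0 \<and> P j} = {j. b+1 \<le> j \<and> j < 0 \<and> P j}" using F2 by (auto, smt)
    then show ?thesis unfolding e1 using F2 by simp
  qed
qed

lemma cntc_step: "cntc E a (b+1) = (cntc E a b \<noteq> (Ver a b \<in> E))"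
  unfolding cntc_def by (rule cnt_step_gen)

lemma cntr_step: "cntr E (a+1) = (cntr E a \<noteq> (Hor a 0 \<in> E))"
  unfolding cntr_def by (rule cnt_step_gen)

lemma cntc_0: "cntc E a 0 = False" unfolding cntc_def by auto

lemma cob_vert: "cob E (a,b+1) = (cob E (a,b) \<noteq> (Ver a b \<in> E))"
  unfolding cob_def by (simp add: cntc_step) blast

lemma cntc_diff:
  assumes fe: "face_even E"
  shows "(cntc E (a+1) b \<noteq> cntc E a b) = ((Hor a b \<in> E) \<noteq> (Hor a 0 \<in> E))"
proof (induct b rule: int_induct[where k=0])
  case base then show ?case by (simp add: cntc_0)
next
  case (step1 i)
  have f: "((Hor a i \<in> E) = (Hor a (i+1) \<in> E)) = ((Ver a i \<in> E) = (Ver (a+1) i \<in> E))"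
    using fe unfolding face_even_def by blast
  show ?case using step1(2) f by (simp add: cntc_step) blast
next
  case (step2 i)
  have f: "((Hor a (i-1) \<in> E) = (Hor a (i-1+1) \<in> E)) = ((Ver a (i-1) \<in> E) = (Ver (a+1) (i-1) \<in> E))"
    using fe unfolding face_even_def by blast
  have s1: "cntc E (a+1) i = (cntc E (a+1) (i-1) \<noteq> (Ver (a+1) (i-1) \<in> E))"
    using cntc_step[of E "a+1" "i-1"] by simp
  have s2: "cntc E a i = (cntc E a (i-1) \<noteq> (Ver a (i-1) \<in> E))"
    using cntc_step[of E "a" "i-1"] by simp
  show ?case using step2(2) f s1 s2 by simp blast
qed

lemma cob_hor:
  assumes fe: "face_even E"
  shows "cob E (a+1,b) = (cob E (a,b) \<noteq> (Hor a b \<in> E))"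
  using cntc_diff[OF fe, of a b] unfolding cob_def by (simp add: cntr_step) blast

lemma adj_cases:
  assumes "adj u v"
  shows "v = (fst u + 1, snd u) \<or> v = (fst u - 1, snd u) \<or> v = (fst u, snd u + 1) \<or> v = (fst u, snd u - 1)"
  using assms unfolding adj_def by (cases u; cases v) (auto simp: abs_if split: if_splits)

lemma adj_sym: "adj u v \<Longrightarrow> adj v u" unfolding adj_def by auto

lemma cob_adj:
  assumes fe: "face_even E" and a: "adj u v"
  shows "(cob E u \<noteq> cob E v) = ({u,v} \<in> E)"
proof -
  obtain p q where u: "u = (p,q)" by (cases u)
  from adj_cases[OF a] u consider "v = (p+1,q)" | "v = (p-1,q)" | "v = (p,q+1)" | "v = (p,q-1)" by auto
  then show ?thesis
  proof cases
    case 1 then show ?thesis using cob_hor[OF fe, of p q] u by (simp add: Hor_def) blast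
  next
    case 2 then show ?thesis using cob_hor[OF fe, of "p-1" q] u by (simp add: Hor_def insert_commute) blast
  next
    case 3 then show ?thesis using cob_vert[of E p q] u by (simp add: Ver_def) blast
  next
    case 4 then show ?thesis using cob_vert[of E p "q-1"] u by (simp add: Ver_def insert_commute) blast
  qed
qed



lemma row_const_nat:
  assumes fe: "face_even E"
  shows "(\<forall>i. a \<le> i \<and> i < a + int k \<longrightarrow> Hor i b \<notin> E) \<longrightarrow> cob E (a + int k, b) = cob E (a,b)"
proof (induct k)
  case 0 then show ?case by simp
next
  case (Suc k)
  show ?case
  proof
    assume h: "\<forall>i. a \<le> i \<and> i < a + int (Suc k) \<longrightarrow> Hor i b \<notin> E"
    then have "cob E (a + int k, b) = cob E (a,b)" using Suc by auto
    moreover have "Hor (a + int k) b \<notin> E" using h by auto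
    ultimately show "cob E (a + int (Suc k), b) = cob E (a,b)"
      using cob_hor[OF fe, of "a + int k" b] by (simp add: ac_simps)
  qed
qed

lemma row_const:
  assumes fe: "face_even E" and h: "\<forall>i. min a a' \<le> i \<and> i < max a a' \<longrightarrow> Hor i b \<notin> E"
  shows "cob E (a, b) = cob E (a',b)"
proof (cases "a \<le> a'")
  case True
  then obtain k where k: "a' = a + int k" by (metis le_iff_add nat_int zle_iff_zadd)
  show ?thesis using row_const_nat[OF fe, of a k b] h k True by auto
next
  case False
  then obtain k where k: "a = a' + int k" by (metis le_iff_add nat_int zle_iff_zadd nle_le)
  show ?thesis using row_const_nat[OF fe, of a' k b] h k False by auto
qed

lemma col_const_nat:
  shows "(\<forall>j. b \<le> j \<and> j < b + int k \<longrightarrow> Ver a j \<notin> E) \<longrightarrow> cob E (a, b + int k) = cob E (a,b)"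
proof (induct k)
  case 0 then show ?case by simp
next
  case (Suc k)
  show ?case
  proof
    assume h: "\<forall>j. b \<le> j \<and> j < b + int (Suc k) \<longrightarrow> Ver a j \<notin> E"
    then have "cob E (a, b + int k) = cob E (a,b)" using Suc by auto
    moreover have "Ver a (b + int k) \<notin> E" using h by auto
    ultimately show "cob E (a, b + int (Suc k)) = cob E (a,b)"
      using cob_vert[of E a "b + int k"] by (simp add: ac_simps)
  qed
qed

lemma col_const:
  assumes h: "\<forall>j. min b b' \<le> j \<and> j < max b b' \<longrightarrow> Ver a j \<notin> E"
  shows "cob E (a, b) = cob E (a,b')"
proof (cases "b \<le> b'")
  case True
  then obtain k where k: "b' = b + int k" by (metis le_iff_add nat_int zle_iff_zadd)
  show ?thesis using col_const_nat[of b k a E] h k True by auto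
next
  case False
  then obtain k where k: "b = b' + int k" by (metis le_iff_add nat_int zle_iff_zadd nle_le)
  show ?thesis using col_const_nat[of b' k a E] h k False by auto
qed

lemma cob_far:
  assumes fe: "face_even E" and bnd: "\<forall>e\<in>E. \<forall>w\<in>e. \<bar>fst w\<bar> \<le> N \<and> \<bar>snd w\<bar> \<le> N"
    and v: "\<bar>fst v\<bar> > N \<or> \<bar>snd v\<bar> > N"
  shows "cob E v = cob E (N+1,N+1)"
proof -
  obtain p q where vv: "v = (p,q)" by (cases v)
  have noV: "Ver a j \<notin> E" if "\<bar>a\<bar> > N" for a j
    using bnd that unfolding Ver_def by fastforce
  have noH: "Hor i b \<notin> E" if "\<bar>b\<bar> > N" for i b
    using bnd that unfolding Hor_def by fastforce
  have "N \<ge> 0 \<or> True" by simp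
  show ?thesis
  proof (cases "\<bar>p\<bar> > N")
    case True
    have "cob E (p,q) = cob E (p,N+1)" by (rule col_const) (use noV True in auto)
    also have "\<dots> = cob E (N+1,N+1)" proof (rule row_const[OF fe])
      show "\<forall>i. min p (N+1) \<le> i \<and> i < max p (N+1) \<longrightarrow> Hor i (N+1) \<notin> E"
      proof (intro allI impI)
        fix i
        show "Hor i (N+1) \<notin> E"
        proof (cases "N + 1 > N")
          case True then show ?thesis using noH[of "N+1"] by (cases "N+1 \<ge> 0") auto
        qed auto
      qed
    qed
    finally show ?thesis using vv by simp
  next
    case False
    then have qN: "\<bar>q\<bar> > N" using v vv by auto
    have "cob E (p,q) = cob E (N+1,q)" by (rule row_const[OF fe]) (use noH qN in auto)
    also have "\<dots> = cob E (N+1,N+1)" proof (rule col_const)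
      have "\<bar>N+1\<bar> > N" using qN by auto
      then show "\<forall>j. min q (N+1) \<le> j \<and> j < max q (N+1) \<longrightarrow> Ver (N+1) j \<notin> E" using noV by auto
    qed
    finally show ?thesis using vv by simp
  qed
qed



definition sa :: "pt \<times> pt \<Rightarrow> pt" where
  "sa d = (fst (fst d) - (snd (snd d) - snd (fst d)), snd (fst d) + (fst (snd d) - fst (fst d)))"
definition sb :: "pt \<times> pt \<Rightarrow> pt" where
  "sb d = (fst (snd d) - (snd (snd d) - snd (fst d)), snd (snd d) + (fst (snd d) - fst (fst d)))"

definition succ :: "pt set \<Rightarrow> pt \<times> pt \<Rightarrow> pt \<times> pt" where
  "succ K d = (if sa d \<notin> K then (fst d, sa d) else if sb d \<notin> K then (sa d, sb d) else (sb d, snd d))"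

definition bd :: "pt set \<Rightarrow> pt \<times> pt \<Rightarrow> bool" where
  "bd K d \<longleftrightarrow> adj (fst d) (snd d) \<and> fst d \<in> K \<and> snd d \<notin> K"

lemma succ_AB: "succ K ((m,n),(m+1,n)) = (if (m,n+1) \<notin> K then ((m,n),(m,n+1)) else if (m+1,n+1) \<notin> K then ((m,n+1),(m+1,n+1)) else ((m+1,n+1),(m+1,n)))"
  unfolding succ_def sa_def sb_def by (simp add: ac_simps)
lemma succ_BC: "succ K ((m+1,n),(m+1,n+1)) = (if (m,n) \<notin> K then ((m+1,n),(m,n)) else if (m,n+1) \<notin> K then ((m,n),(m,n+1)) else ((m,n+1),(m+1,n+1)))"
  unfolding succ_def sa_def sb_def by (simp add: ac_simps)
lemma succ_CD: "succ K ((m+1,n+1),(m,n+1)) = (if (m+1,n) \<notin> K then ((m+1,n+1),(m+1,n)) else if (m,n) \<notin> K then ((m+1,n),(m,n)) else ((m,n),(m,n+1)))"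
  unfolding succ_def sa_def sb_def by (simp add: ac_simps)
lemma succ_DA: "succ K ((m,n+1),(m,n)) = (if (m+1,n+1) \<notin> K then ((m,n+1),(m+1,n+1)) else if (m+1,n) \<notin> K then ((m+1,n+1),(m+1,n)) else ((m+1,n),(m,n)))"
  unfolding succ_def sa_def sb_def by (simp add: ac_simps)

lemma bool_face_even:
  assumes "oAB \<Longrightarrow> kA \<and> \<not>kB" "oBA \<Longrightarrow> kB \<and> \<not>kA" "oBC \<Longrightarrow> kB \<and> \<not>kC" "oCB \<Longrightarrow> kC \<and> \<not>kB"
    "oCD \<Longrightarrow> kC \<and> \<not>kD" "oDC \<Longrightarrow> kD \<and> \<not>kC" "oDA \<Longrightarrow> kD \<and> \<not>kA" "oAD \<Longrightarrow> kA \<and> \<not>kD"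
    "kA \<and> \<not>kB \<Longrightarrow> oAB = (if \<not>kD then oAD else if \<not>kC then oDC else oCB)"
    "kB \<and> \<not>kC \<Longrightarrow> oBC = (if \<not>kA then oBA else if \<not>kD then oAD else oDC)"
    "kC \<and> \<not>kD \<Longrightarrow> oCD = (if \<not>kB then oCB else if \<not>kA then oBA else oAD)"
    "kD \<and> \<not>kA \<Longrightarrow> oDA = (if \<not>kC then oDC else if \<not>kB then oCB else oBA)"
  shows "((oAB \<or> oBA) = (oDC \<or> oCD)) = ((oAD \<or> oDA) = (oBC \<or> oCB))"
  using assms unfolding if_bool_eq_conj by sat

lemma bool_W:
  assumes "oAB \<Longrightarrow> kA \<and> \<not>kB" "oBA \<Longrightarrow> kB \<and> \<not>kA" "oBC \<Longrightarrow> kB \<and> \<not>kC" "oCB \<Longrightarrow> kC \<and> \<not>kB"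
    "oCD \<Longrightarrow> kC \<and> \<not>kD" "oDC \<Longrightarrow> kD \<and> \<not>kC" "oDA \<Longrightarrow> kD \<and> \<not>kA" "oAD \<Longrightarrow> kA \<and> \<not>kD"
    "kA \<and> \<not>kB \<Longrightarrow> oAB = (if \<not>kD then oAD else if \<not>kC then oDC else oCB)"
    "kB \<and> \<not>kC \<Longrightarrow> oBC = (if \<not>kA then oBA else if \<not>kD then oAD else oDC)"
    "kC \<and> \<not>kD \<Longrightarrow> oCD = (if \<not>kB then oCB else if \<not>kA then oBA else oAD)"
    "kD \<and> \<not>kA \<Longrightarrow> oDA = (if \<not>kC then oDC else if \<not>kB then oCB else oBA)"
    "kA \<Longrightarrow> \<not>pA" "kB \<Longrightarrow> \<not>pB" "kC \<Longrightarrow> \<not>pC" "kD \<Longrightarrow> \<not>pD"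
    "(pA \<noteq> pB) = (oAB \<or> oBA)" "(pB \<noteq> pC) = (oBC \<or> oCB)" "(pC \<noteq> pD) = (oCD \<or> oDC)" "(pD \<noteq> pA) = (oDA \<or> oAD)"
    "oAB \<or> oBA \<or> oBC \<or> oCB \<or> oCD \<or> oDC \<or> oDA \<or> oAD"
  shows "(\<not>kA \<longrightarrow> pA) \<and> (\<not>kB \<longrightarrow> pB) \<and> (\<not>kC \<longrightarrow> pC) \<and> (\<not>kD \<longrightarrow> pD)"
  using assms unfolding if_bool_eq_conj by sat



lemmas succ_alt = succ_def

lemma dart_face:
  assumes "adj x y"
  shows "\<exists>m n. {x,y} \<in> sides m n \<and> {x, sa (x,y)} \<in> sides m n \<and> {sa (x,y), sb (x,y)} \<in> sides m n
     \<and> adj x (sa (x,y)) \<and> adj (sa (x,y)) (sb (x,y)) \<and> adj (sb (x,y)) y"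
proof -
  obtain p q where x: "x = (p,q)" by (cases x)
  from adj_cases[OF assms] x consider "y = (p+1,q)" | "y = (p-1,q)" | "y = (p,q+1)" | "y = (p,q-1)" by auto
  then show ?thesis
  proof cases
    case 1 show ?thesis apply (rule exI[of _ p], rule exI[of _ q])
      using 1 x by (auto simp: sa_def sb_def sides_def Hor_def Ver_def adj_def insert_commute)
  next
    case 2 show ?thesis apply (rule exI[of _ "p-1"], rule exI[of _ "q-1"])
      using 2 x by (auto simp: sa_def sb_def sides_def Hor_def Ver_def adj_def insert_commute)
  next
    case 3 show ?thesis apply (rule exI[of _ "p-1"], rule exI[of _ q])
      using 3 x by (auto simp: sa_def sb_def sides_def Hor_def Ver_def adj_def insert_commute)
  next
    case 4 show ?thesis apply (rule exI[of _ p], rule exI[of _ "q-1"])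
      using 4 x by (auto simp: sa_def sb_def sides_def Hor_def Ver_def adj_def insert_commute)
  qed
qed

lemma bd_succ: "bd K d \<Longrightarrow> bd K (succ K d)"
  using dart_face[of "fst d" "snd d"] unfolding bd_def succ_alt by (cases d) (auto simp: adj_sym)

lemma side_adj: "{u,v} \<in> sides m n \<Longrightarrow> adj u v"
  unfolding sides_def Hor_def Ver_def adj_def by (auto simp: doubleton_eq_iff)

lemma side_corners: "e \<in> sides m n \<Longrightarrow> e \<subseteq> {(m,n),(m+1,n),(m+1,n+1),(m,n+1)}"
  unfolding sides_def Hor_def Ver_def by auto

lemma adj_row: "(adj\<^sup>*\<^sup>*) (p,q) (p + int k, q)"
proof (induct k)
  case (Suc k) then show ?case
    by (rule rtranclp.rtrancl_into_rtrancl) (simp add: adj_def)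
qed simp

lemma adj_col: "(adj\<^sup>*\<^sup>*) (p,q) (p, q + int k)"
proof (induct k)
  case (Suc k) then show ?case
    by (rule rtranclp.rtrancl_into_rtrancl) (simp add: adj_def)
qed simp

lemma rtranclp_sym_rel:
  assumes "\<And>a b. R a b \<Longrightarrow> R b a" "R\<^sup>*\<^sup>* x y" shows "R\<^sup>*\<^sup>* y x"
  using assms(2) by induct (auto intro: converse_rtranclp_into_rtranclp assms(1))

lemma adj_conn: "(adj\<^sup>*\<^sup>*) u w"
proof -
  obtain p q where u: "u = (p,q)" by (cases u)
  obtain p' q' where w: "w = (p',q')" by (cases w)
  have r: "(adj\<^sup>*\<^sup>*) (p,q) (p',q)"
  proof (cases "p \<le> p'")
    case True then obtain k where "p' = p + int k" by (metis zle_iff_zadd)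
    then show ?thesis using adj_row by simp
  next
    case False then obtain k where "p = p' + int k" by (metis zle_iff_zadd nle_le)
    then show ?thesis using adj_row[of p' q k] rtranclp_sym_rel[of adj] adj_sym by blast
  qed
  have c: "(adj\<^sup>*\<^sup>*) (p',q) (p',q')"
  proof (cases "q \<le> q'")
    case True then obtain k where "q' = q + int k" by (metis zle_iff_zadd)
    then show ?thesis using adj_col by simp
  next
    case False then obtain k where "q = q' + int k" by (metis zle_iff_zadd nle_le)
    then show ?thesis using adj_col[of p' q' k] rtranclp_sym_rel[of adj] adj_sym by blast
  qed
  show ?thesis using r c u w by auto
qed

lemma path_exit:
  assumes "R\<^sup>*\<^sup>* a b" "a \<in> S" "b \<notin> S" shows "\<exists>x y. R x y \<and> x \<in> S \<and> y \<notin> S"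
  using assms by induct blast+



locale core =
  fixes \<omega> :: "pt \<Rightarrow> bool" and X :: "pt set set" and v0 :: pt
  assumes A0: "e \<in> X \<Longrightarrow> \<exists>u v. e = {u,v} \<and> adj u v"
    and A1: "{u,v} \<in> X \<Longrightarrow> \<omega> u \<noteq> \<omega> v"
    and A2: "e \<in> X \<Longrightarrow> e \<in> sides m n \<Longrightarrow> {u,v} \<in> sides m n \<Longrightarrow> \<omega> u \<noteq> \<omega> v \<Longrightarrow> {u,v} \<in> X"
    and A3: "e0 \<in> X \<Longrightarrow> Q e0 \<Longrightarrow> (\<And>m n e e'. e \<in> sides m n \<Longrightarrow> e' \<in> sides m n \<Longrightarrow> e \<in> X \<Longrightarrow> e' \<in> X \<Longrightarrow> Q e \<Longrightarrow> Q e')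
              \<Longrightarrow> e \<in> X \<Longrightarrow> Q e"
    and A4: "infinite X"
    and Kinf: "infinite {w. (\<lambda>u v. adj u v \<and> {u,v} \<notin> X)\<^sup>*\<^sup>* v0 w}"
begin

definition "GCX u v \<longleftrightarrow> adj u v \<and> {u,v} \<notin> X"
definition "K = {w. GCX\<^sup>*\<^sup>* v0 w}"
definition "sameA u v \<longleftrightarrow> adj u v \<and> \<omega> u = \<omega> v"

lemma Kinf': "infinite K" using Kinf unfolding K_def GCX_def by simp

lemma fe_X: "face_even X"
  unfolding face_even_def
proof (intro allI)
  fix m n
  let ?S = "sides m n"
  have mem: "(s \<in> X) = (\<omega> u \<noteq> \<omega> v)" if "s \<in> ?S" "s = {u,v}" "\<exists>t\<in>?S. t \<in> X" for s u v
    using that A1 A2 by blast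
  show "((Hor m n \<in> X) = (Hor m (n + 1) \<in> X)) = ((Ver m n \<in> X) = (Ver (m + 1) n \<in> X))"
  proof (cases "\<exists>t\<in>?S. t \<in> X")
    case True
    have "(Hor m n \<in> X) = (\<omega> (m,n) \<noteq> \<omega> (m+1,n))" by (rule mem) (use True in \<open>auto simp: sides_def Hor_def\<close>)
    moreover have "(Hor m (n+1) \<in> X) = (\<omega> (m,n+1) \<noteq> \<omega> (m+1,n+1))" by (rule mem) (use True in \<open>auto simp: sides_def Hor_def\<close>)
    moreover have "(Ver m n \<in> X) = (\<omega> (m,n) \<noteq> \<omega> (m,n+1))" by (rule mem) (use True in \<open>auto simp: sides_def Ver_def\<close>)
    moreover have "(Ver (m+1) n \<in> X) = (\<omega> (m+1,n) \<noteq> \<omega> (m+1,n+1))" by (rule mem) (use True in \<open>auto simp: sides_def Ver_def\<close>)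
    ultimately show ?thesis by blast
  next
    case False then show ?thesis by (auto simp: sides_def)
  qed
qed

definition "\<sigma> = cob X"

lemma sigma_adj: "adj u v \<Longrightarrow> (\<sigma> u \<noteq> \<sigma> v) = ({u,v} \<in> X)"
  unfolding \<sigma>_def by (rule cob_adj[OF fe_X])

lemma sigma_K: "w \<in> K \<Longrightarrow> \<sigma> w = \<sigma> v0"
proof -
  assume "w \<in> K"
  then have "GCX\<^sup>*\<^sup>* v0 w" by (simp add: K_def)
  then show ?thesis
  proof induct
    case (step a b) then show ?case using sigma_adj[of a b] by (auto simp: GCX_def)
  qed simp
qed

lemma X_not_K: "{u,v} \<in> X \<Longrightarrow> adj u v \<Longrightarrow> u \<in> K \<Longrightarrow> v \<in> K \<Longrightarrow> False"
  using sigma_adj sigma_K by metis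

lemma K_closed: "u \<in> K \<Longrightarrow> adj u w \<Longrightarrow> {u,w} \<notin> X \<Longrightarrow> w \<in> K"
  unfolding K_def by (auto intro: rtranclp.rtrancl_into_rtrancl simp: GCX_def)

lemma v0K: "v0 \<in> K" by (simp add: K_def)

lemma agree_face: "e \<in> X \<Longrightarrow> e \<in> sides m n \<Longrightarrow> {u,v} \<in> sides m n \<Longrightarrow> u \<in> K \<Longrightarrow> v \<in> K \<Longrightarrow> \<omega> u = \<omega> v"
  using A2 X_not_K side_adj by blast

lemma bd_X: "bd K (x,y) \<Longrightarrow> {x,y} \<in> X"
  using K_closed[of x y] unfolding bd_def by auto

lemma succ_same: assumes "bd K d" shows "sameA\<^sup>*\<^sup>* (fst d) (fst (succ K d))"
proof -
  obtain x y where d: "d = (x,y)" by (cases d)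
  have a: "adj x y" "x \<in> K" "y \<notin> K" using assms d by (auto simp: bd_def)
  obtain m n where f: "{x,y} \<in> sides m n" "{x, sa (x,y)} \<in> sides m n" "{sa (x,y), sb (x,y)} \<in> sides m n"
     "adj x (sa (x,y))" "adj (sa (x,y)) (sb (x,y))" using dart_face[OF a(1)] by blast
  have X: "{x,y} \<in> X" using bd_X assms d by simp
  show ?thesis
  proof (cases "sa (x,y) \<in> K")
    case False then show ?thesis using d by (simp add: succ_def)
  next
    case True
    have s1: "sameA x (sa (x,y))" using agree_face[OF X f(1) f(2) a(2) True] f(4) by (simp add: sameA_def)
    show ?thesis
    proof (cases "sb (x,y) \<in> K")
      case False then show ?thesis using d True s1 by (simp add: succ_def)
    next
      case T2: True
      have s2: "sameA (sa (x,y)) (sb (x,y))" using agree_face[OF X f(1) f(3) True T2] f(5) by (simp add: sameA_def)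
      have "sameA\<^sup>*\<^sup>* x (sb (x,y))" using s1 s2 by (meson r_into_rtranclp rtranclp.rtrancl_into_rtrancl)
      then show ?thesis using d True T2 by (simp add: succ_def)
    qed
  qed
qed

lemma sameA_sym: "sameA a b \<Longrightarrow> sameA b a" unfolding sameA_def using adj_sym by auto

lemma exists_bd: "\<exists>d. bd K d"
proof -
  obtain e where e: "e \<in> X" using A4 by (metis finite.emptyI ex_in_conv)
  obtain u v where uv: "e = {u,v}" "adj u v" using A0[OF e] by blast
  have "u \<notin> K \<or> v \<notin> K" using X_not_K e uv by blast
  then obtain w where w: "w \<notin> K" by blast
  obtain x y where "adj x y" "x \<in> K" "y \<notin> K" using path_exit[OF adj_conn[of v0 w] v0K w] by blast
  then show ?thesis unfolding bd_def by (intro exI[of _ "(x,y)"]) simp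
qed

end


locale core_fin = core +
  fixes d0 :: "pt \<times> pt"
  assumes bd0: "bd K d0" and finCl: "finite {w. sameA\<^sup>*\<^sup>* (fst d0) w}"
begin

definition "Rel d d' \<longleftrightarrow> bd K d \<and> bd K d' \<and> (d' = succ K d \<or> d = succ K d')"
definition "Ob = {d. Rel\<^sup>*\<^sup>* d0 d}"

lemma O_bd: "d \<in> Ob \<Longrightarrow> bd K d"
proof -
  assume "d \<in> Ob"
  then have "Rel\<^sup>*\<^sup>* d0 d" by (simp add: Ob_def)
  then show ?thesis by induct (auto simp: bd0 Rel_def)
qed

lemma O_succ: "bd K d \<Longrightarrow> (d \<in> Ob) = (succ K d \<in> Ob)"
proof
  assume b: "bd K d" and "d \<in> Ob"
  then show "succ K d \<in> Ob" unfolding Ob_def using bd_succ[OF b]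
    by (auto intro: rtranclp.rtrancl_into_rtrancl simp: Rel_def)
next
  assume b: "bd K d" and "succ K d \<in> Ob"
  then show "d \<in> Ob" unfolding Ob_def using bd_succ[OF b]
    by (auto intro: rtranclp.rtrancl_into_rtrancl simp: Rel_def)
qed

lemma O_same: "d \<in> Ob \<Longrightarrow> sameA\<^sup>*\<^sup>* (fst d0) (fst d)"
proof -
  assume "d \<in> Ob"
  then have "Rel\<^sup>*\<^sup>* d0 d" by (simp add: Ob_def)
  then show ?thesis
  proof induct
    case (step a b)
    have "sameA\<^sup>*\<^sup>* (fst a) (fst b)"
    proof (cases "b = succ K a")
      case True then show ?thesis using succ_same step(2) by (simp add: Rel_def)
    next
      case False then have "a = succ K b" "bd K b" using step(2) by (auto simp: Rel_def)
      then show ?thesis using succ_same[of b] rtranclp_sym_rel[of sameA] sameA_sym by metis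
    qed
    then show ?case using step(3) by (meson rtranclp_trans)
  qed simp
qed

lemma nbr_fin: "finite {y. adj x y}"
proof -
  have "{y. adj x y} \<subseteq> {(fst x + 1, snd x), (fst x - 1, snd x), (fst x, snd x + 1), (fst x, snd x - 1)}"
    using adj_cases by blast
  then show ?thesis by (rule finite_subset) simp
qed

lemma O_fin: "finite Ob"
proof -
  have "Ob \<subseteq> Sigma {w. sameA\<^sup>*\<^sup>* (fst d0) w} (\<lambda>x. {y. adj x y})"
    using O_same O_bd by (auto simp: bd_def)
  then show ?thesis by (rule finite_subset) (use finCl nbr_fin in auto)
qed

definition "E = (\<lambda>d. {fst d, snd d}) ` Ob"

lemma E_fin: "finite E" using O_fin by (simp add: E_def)
lemma E_X: "E \<subseteq> X" using O_bd bd_X by (auto simp: E_def)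
lemma E_side: "({u,v} \<in> E) = ((u,v) \<in> Ob \<or> (v,u) \<in> Ob)"
  unfolding E_def by (auto simp: doubleton_eq_iff image_iff) (metis fst_conv snd_conv)+

lemma face_facts:
  fixes m n :: int
  defines "A \<equiv> (m,n)" and "B \<equiv> (m+1,n)" and "C \<equiv> (m+1,n+1)" and "D \<equiv> (m,n+1)"
  shows "(A,B) \<in> Ob \<Longrightarrow> A \<in> K \<and> B \<notin> K" "(B,A) \<in> Ob \<Longrightarrow> B \<in> K \<and> A \<notin> K"
   "(B,C) \<in> Ob \<Longrightarrow> B \<in> K \<and> C \<notin> K" "(C,B) \<in> Ob \<Longrightarrow> C \<in> K \<and> B \<notin> K"
   "(C,D) \<in> Ob \<Longrightarrow> C \<in> K \<and> D \<notin> K" "(D,C) \<in> Ob \<Longrightarrow> D \<in> K \<and> C \<notin> K"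
   "(D,A) \<in> Ob \<Longrightarrow> D \<in> K \<and> A \<notin> K" "(A,D) \<in> Ob \<Longrightarrow> A \<in> K \<and> D \<notin> K"
   "A \<in> K \<and> B \<notin> K \<Longrightarrow> ((A,B) \<in> Ob) = (if D \<notin> K then (A,D) \<in> Ob else if C \<notin> K then (D,C) \<in> Ob else (C,B) \<in> Ob)"
   "B \<in> K \<and> C \<notin> K \<Longrightarrow> ((B,C) \<in> Ob) = (if A \<notin> K then (B,A) \<in> Ob else if D \<notin> K then (A,D) \<in> Ob else (D,C) \<in> Ob)"
   "C \<in> K \<and> D \<notin> K \<Longrightarrow> ((C,D) \<in> Ob) = (if B \<notin> K then (C,B) \<in> Ob else if A \<notin> K then (B,A) \<in> Ob else (A,D) \<in> Ob)"
   "D \<in> K \<and> A \<notin> K \<Longrightarrow> ((D,A) \<in> Ob) = (if C \<notin> K then (D,C) \<in> Ob else if B \<notin> K then (C,B) \<in> Ob else (B,A) \<in> Ob)"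
  using O_bd[unfolded bd_def] apply (auto simp: A_def B_def C_def D_def)[8]
proof -
  assume "A \<in> K \<and> B \<notin> K"
  then have "bd K (A,B)" by (simp add: bd_def adj_def A_def B_def)
  then show "((A,B) \<in> Ob) = (if D \<notin> K then (A,D) \<in> Ob else if C \<notin> K then (D,C) \<in> Ob else (C,B) \<in> Ob)"
    using O_succ by (simp add: A_def B_def C_def D_def succ_AB)
next
  assume "B \<in> K \<and> C \<notin> K"
  then have "bd K (B,C)" by (simp add: bd_def adj_def B_def C_def)
  then show "((B,C) \<in> Ob) = (if A \<notin> K then (B,A) \<in> Ob else if D \<notin> K then (A,D) \<in> Ob else (D,C) \<in> Ob)"
    using O_succ by (simp add: A_def B_def C_def D_def succ_BC)
next
  assume "C \<in> K \<and> D \<notin> K"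
  then have "bd K (C,D)" by (simp add: bd_def adj_def C_def D_def)
  then show "((C,D) \<in> Ob) = (if B \<notin> K then (C,B) \<in> Ob else if A \<notin> K then (B,A) \<in> Ob else (A,D) \<in> Ob)"
    using O_succ by (simp add: A_def B_def C_def D_def succ_CD)
next
  assume "D \<in> K \<and> A \<notin> K"
  then have "bd K (D,A)" by (simp add: bd_def adj_def D_def A_def)
  then show "((D,A) \<in> Ob) = (if C \<notin> K then (D,C) \<in> Ob else if B \<notin> K then (C,B) \<in> Ob else (B,A) \<in> Ob)"
    using O_succ by (simp add: A_def B_def C_def D_def succ_DA)
qed

lemma fe_E: "face_even E"
  unfolding face_even_def
proof (intro allI)
  fix m n :: int
  have h: "Hor m n = {(m,n),(m+1,n)}" "Hor m (n+1) = {(m,n+1),(m+1,n+1)}"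
    "Ver m n = {(m,n),(m,n+1)}" "Ver (m+1) n = {(m+1,n),(m+1,n+1)}" by (auto simp: Hor_def Ver_def)
  show "((Hor m n \<in> E) = (Hor m (n + 1) \<in> E)) = ((Ver m n \<in> E) = (Ver (m + 1) n \<in> E))"
    unfolding h E_side using bool_face_even[OF face_facts[of m n]] by blast
qed

end


context core_fin begin

definition "NN = Max (insert 0 ((\<lambda>w. max \<bar>fst w\<bar> \<bar>snd w\<bar>) ` \<Union>E))"

lemma UE_fin: "finite (\<Union>E)"
proof -
  have "\<forall>e\<in>E. finite e" unfolding E_def by auto
  then show ?thesis using E_fin by auto
qed

lemma bnd: "\<forall>e\<in>E. \<forall>w\<in>e. \<bar>fst w\<bar> \<le> NN \<and> \<bar>snd w\<bar> \<le> NN"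
proof (intro ballI)
  fix e w assume "e \<in> E" "w \<in> e"
  then have "max \<bar>fst w\<bar> \<bar>snd w\<bar> \<le> NN" unfolding NN_def
    by (intro Max_ge) (use UE_fin in auto)
  then show "\<bar>fst w\<bar> \<le> NN \<and> \<bar>snd w\<bar> \<le> NN" by simp
qed

definition "P w = (cob E w \<noteq> cob E (NN+1,NN+1))"

lemma P_far: "\<bar>fst w\<bar> > NN \<or> \<bar>snd w\<bar> > NN \<Longrightarrow> \<not> P w"
proof -
  assume a: "\<bar>fst w\<bar> > NN \<or> \<bar>snd w\<bar> > NN"
  show "\<not> P w" unfolding P_def using cob_far[OF fe_E bnd a] by simp
qed

lemma P_adj: "adj u v \<Longrightarrow> (P u \<noteq> P v) = ({u,v} \<in> E)"
proof -
  assume a: "adj u v"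
  have "(cob E u \<noteq> cob E v) = ({u,v} \<in> E)" by (rule cob_adj[OF fe_E a])
  then show ?thesis unfolding P_def by (cases "cob E u"; cases "cob E v"; cases "cob E (NN+1,NN+1)") auto
qed

lemma cobE_K: "w \<in> K \<Longrightarrow> cob E w = cob E v0"
proof -
  assume "w \<in> K"
  then have "GCX\<^sup>*\<^sup>* v0 w" by (simp add: K_def)
  then show ?thesis
  proof induct
    case (step a b) then show ?case using cob_adj[OF fe_E, of a b] E_X by (auto simp: GCX_def)
  qed simp
qed

definition "bxN = {-NN..NN} \<times> {-NN..NN}"
lemma box_fin: "finite bxN" by (simp add: bxN_def)
lemma not_box: "w \<notin> bxN \<Longrightarrow> \<bar>fst w\<bar> > NN \<or> \<bar>snd w\<bar> > NN"
  unfolding bxN_def by (cases w) auto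

lemma P_K: "w \<in> K \<Longrightarrow> \<not> P w"
proof -
  assume w: "w \<in> K"
  have "\<not> K \<subseteq> bxN" using Kinf' box_fin finite_subset by blast
  then obtain k where k: "k \<in> K" "k \<notin> bxN" by blast
  have "\<not> P k" using P_far not_box k by blast
  then show ?thesis using cobE_K[OF w] cobE_K[OF k(1)] by (simp add: P_def)
qed

lemma W:
  assumes "\<exists>s\<in>sides m n. s \<in> E"
  shows "(m,n) \<notin> K \<longrightarrow> P (m,n)" "(m+1,n) \<notin> K \<longrightarrow> P (m+1,n)"
        "(m+1,n+1) \<notin> K \<longrightarrow> P (m+1,n+1)" "(m,n+1) \<notin> K \<longrightarrow> P (m,n+1)"
proof -
  have h: "Hor m n = {(m,n),(m+1,n)}" "Hor m (n+1) = {(m,n+1),(m+1,n+1)}"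
    "Ver m n = {(m,n),(m,n+1)}" "Ver (m+1) n = {(m+1,n),(m+1,n+1)}" by (auto simp: Hor_def Ver_def)
  have ex: "((m,n),(m+1,n)) \<in> Ob \<or> ((m+1,n),(m,n)) \<in> Ob \<or> ((m+1,n),(m+1,n+1)) \<in> Ob \<or> ((m+1,n+1),(m+1,n)) \<in> Ob \<or>
     ((m+1,n+1),(m,n+1)) \<in> Ob \<or> ((m,n+1),(m+1,n+1)) \<in> Ob \<or> ((m,n+1),(m,n)) \<in> Ob \<or> ((m,n),(m,n+1)) \<in> Ob"
    using assms unfolding sides_def h by (auto simp: E_side)
  have p1: "(P (m,n) \<noteq> P (m+1,n)) = (((m,n),(m+1,n)) \<in> Ob \<or> ((m+1,n),(m,n)) \<in> Ob)"
    using P_adj[of "(m,n)" "(m+1,n)"] E_side by (simp add: adj_def)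
  have p2: "(P (m+1,n) \<noteq> P (m+1,n+1)) = (((m+1,n),(m+1,n+1)) \<in> Ob \<or> ((m+1,n+1),(m+1,n)) \<in> Ob)"
    using P_adj[of "(m+1,n)" "(m+1,n+1)"] E_side by (simp add: adj_def)
  have p3: "(P (m+1,n+1) \<noteq> P (m,n+1)) = (((m+1,n+1),(m,n+1)) \<in> Ob \<or> ((m,n+1),(m+1,n+1)) \<in> Ob)"
    using P_adj[of "(m+1,n+1)" "(m,n+1)"] E_side by (simp add: adj_def)
  have p4: "(P (m,n+1) \<noteq> P (m,n)) = (((m,n+1),(m,n)) \<in> Ob \<or> ((m,n),(m,n+1)) \<in> Ob)"
    using P_adj[of "(m,n+1)" "(m,n)"] E_side by (simp add: adj_def)
  note bw = bool_W[OF face_facts[of m n] P_K P_K P_K P_K p1 p2 p3 p4 ex]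
  show "(m,n) \<notin> K \<longrightarrow> P (m,n)" "(m+1,n) \<notin> K \<longrightarrow> P (m+1,n)"
        "(m+1,n+1) \<notin> K \<longrightarrow> P (m+1,n+1)" "(m,n+1) \<notin> K \<longrightarrow> P (m,n+1)" using bw by auto
qed

definition "Q e \<longleftrightarrow> e \<in> E \<or> (\<forall>w\<in>e. P w)"

lemma Qstep:
  assumes e: "e \<in> sides m n" and e': "e' \<in> sides m n" and eX: "e' \<in> X" and Qe: "Q e"
  shows "Q e'"
proof -
  obtain u v where uv: "e' = {u,v}" "adj u v" using A0[OF eX] by blast
  have cu: "u \<in> {(m,n),(m+1,n),(m+1,n+1),(m,n+1)}" "v \<in> {(m,n),(m+1,n),(m+1,n+1),(m,n+1)}"
    using side_corners[OF e'] uv by auto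
  show ?thesis
  proof (cases "\<exists>s\<in>sides m n. s \<in> E")
    case True
    note w = W[OF True]
    have Wz: "z \<notin> K \<Longrightarrow> P z" if "z \<in> {(m,n),(m+1,n),(m+1,n+1),(m,n+1)}" for z
      using that w by auto
    show ?thesis
    proof (cases "e' \<in> E")
      case True then show ?thesis by (simp add: Q_def)
    next
      case False
      then have puv: "P u = P v" using P_adj[OF uv(2)] uv(1) by auto
      have "u \<notin> K \<or> v \<notin> K" using X_not_K eX uv by blast
      then have "P u \<or> P v" using Wz cu by blast
      then have "P u \<and> P v" using puv by blast
      then show ?thesis using uv(1) by (simp add: Q_def)
    qed
  next
    case False
    have h: "Hor m n = {(m,n),(m+1,n)}" "Hor m (n+1) = {(m,n+1),(m+1,n+1)}"
      "Ver m n = {(m,n),(m,n+1)}" "Ver (m+1) n = {(m+1,n),(m+1,n+1)}" by (auto simp: Hor_def Ver_def)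
    have n: "{(m,n),(m+1,n)} \<notin> E" "{(m,n+1),(m+1,n+1)} \<notin> E" "{(m,n),(m,n+1)} \<notin> E" "{(m+1,n),(m+1,n+1)} \<notin> E"
      using False unfolding sides_def h by auto
    have eq: "P (m,n) = P (m+1,n)" "P (m,n+1) = P (m+1,n+1)" "P (m,n) = P (m,n+1)" "P (m+1,n) = P (m+1,n+1)"
      using P_adj[of "(m,n)" "(m+1,n)"] P_adj[of "(m,n+1)" "(m+1,n+1)"] P_adj[of "(m,n)" "(m,n+1)"]
        P_adj[of "(m+1,n)" "(m+1,n+1)"] n by (auto simp: adj_def)
    have "e \<notin> E" using False e by auto
    then have "\<forall>w\<in>e. P w" using Qe by (simp add: Q_def)
    moreover have "e \<noteq> {}" using e by (auto simp: sides_def Hor_def Ver_def)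
    moreover have "e \<subseteq> {(m,n),(m+1,n),(m+1,n+1),(m,n+1)}" by (rule side_corners[OF e])
    ultimately obtain w where w: "w \<in> e" "P w" "w \<in> {(m,n),(m+1,n),(m+1,n+1),(m,n+1)}" by blast
    have ceq: "\<forall>z\<in>{(m,n),(m+1,n),(m+1,n+1),(m,n+1)}. P z = P (m,n)" using eq by simp
    then have pm: "P (m,n)" using w by metis
    have "P u \<and> P v" using ceq pm cu by blast
    then show ?thesis using uv(1) by (simp add: Q_def)
  qed
qed

lemma contradiction: False
proof -
  obtain x y where d0: "d0 = (x,y)" by (cases d0)
  have "d0 \<in> Ob" by (simp add: Ob_def)
  then have e0E: "{x,y} \<in> E" using d0 E_side[of x y] by simp
  have s1: "{x,y} \<in> X" using e0E E_X by blast
  have s2: "Q {x,y}" using e0E by (simp add: Q_def)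
  have s3: "Q e'" if "e \<in> sides m n" "e' \<in> sides m n" "e \<in> X" "e' \<in> X" "Q e" for m n e e'
    using Qstep[OF that(1) that(2) that(4) that(5)] .
  have allQ: "Q e" if "e \<in> X" for e
    using A3[of "{x,y}" Q, OF s1 s2 s3 that] .
  have "\<not> X \<subseteq> E \<union> Pow bxN"
  proof
    assume "X \<subseteq> E \<union> Pow bxN"
    then have "finite X" by (rule finite_subset) (simp add: E_fin box_fin)
    then show False using A4 by simp
  qed
  then obtain e where e: "e \<in> X" "e \<notin> E" "\<not> e \<subseteq> bxN" by blast
  then obtain w where w: "w \<in> e" "w \<notin> bxN" by blast
  have "P w" using allQ[OF e(1)] e(2) w(1) by (simp add: Q_def)
  then show False using P_far not_box w(2) by blast
qed

end

context core begin
theorem core_main: "\<exists>x y. x \<in> K \<and> {x,y} \<in> X \<and> adj x y \<and> infinite {w. sameA\<^sup>*\<^sup>* x w}"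
proof -
  obtain d where d: "bd K d" using exists_bd by blast
  have "infinite {w. sameA\<^sup>*\<^sup>* (fst d) w}"
  proof
    assume "finite {w. sameA\<^sup>*\<^sup>* (fst d) w}"
    then interpret cf: core_fin \<omega> X v0 d using d by unfold_locales
    show False by (rule cf.contradiction)
  qed
  moreover have "fst d \<in> K" "{fst d, snd d} \<in> X" "adj (fst d) (snd d)" using d bd_X[of "fst d" "snd d"] by (auto simp: bd_def)
  ultimately show ?thesis by blast
qed
end



lemma sq_ge: fixes x :: int assumes "\<bar>x\<bar> \<ge> k" "k \<ge> 0" shows "x*x \<ge> k*k"
proof -
  have "k*k \<le> \<bar>x\<bar>*\<bar>x\<bar>" using assms by (intro mult_mono) auto
  then show ?thesis by (simp add: abs_mult_self_eq)
qed

lemma int_sq1: fixes x y :: int shows "x*x + y*y = 1 \<longleftrightarrow> (\<bar>x\<bar> = 1 \<and> y = 0) \<or> (x = 0 \<and> \<bar>y\<bar> = 1)"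
proof -
  have x: "x = 0 \<or> \<bar>x\<bar> = 1 \<or> x*x \<ge> 4" using sq_ge[of 2 x] by linarith
  have y: "y = 0 \<or> \<bar>y\<bar> = 1 \<or> y*y \<ge> 4" using sq_ge[of 2 y] by linarith
  have a: "\<bar>x\<bar> = 1 \<Longrightarrow> x*x = 1" by (metis abs_mult_self_eq mult_1)
  have b: "\<bar>y\<bar> = 1 \<Longrightarrow> y*y = 1" by (metis abs_mult_self_eq mult_1)
  have c: "x*x \<ge> 0" "y*y \<ge> 0" by auto
  show ?thesis using x y a b c by auto
qed

lemma int_sq4: fixes x y :: int shows "x*x + y*y = 4 \<longleftrightarrow> (\<bar>x\<bar> = 2 \<and> y = 0) \<or> (x = 0 \<and> \<bar>y\<bar> = 2)"
proof -
  have x: "x = 0 \<or> \<bar>x\<bar> = 1 \<or> \<bar>x\<bar> = 2 \<or> x*x \<ge> 9" using sq_ge[of 3 x] by linarith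
  have y: "y = 0 \<or> \<bar>y\<bar> = 1 \<or> \<bar>y\<bar> = 2 \<or> y*y \<ge> 9" using sq_ge[of 3 y] by linarith
  have a: "\<bar>x\<bar> = 1 \<Longrightarrow> x*x = 1" "\<bar>x\<bar> = 2 \<Longrightarrow> x*x = 4" by (metis abs_mult_self_eq mult_1, metis abs_mult_self_eq mult_2 numeral_Bit0 one_add_one)
  have b: "\<bar>y\<bar> = 1 \<Longrightarrow> y*y = 1" "\<bar>y\<bar> = 2 \<Longrightarrow> y*y = 4" by (metis abs_mult_self_eq mult_1, metis abs_mult_self_eq mult_2 numeral_Bit0 one_add_one)
  have c: "x*x \<ge> 0" "y*y \<ge> 0" by auto
  show ?thesis using x y a b c by auto
qed

lemma dist_gpt: "dist (gpt u) (gpt v) = sqrt (real_of_int ((fst u - fst v)*(fst u - fst v) + (snd u - snd v)*(snd u - snd v)))"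
  unfolding gpt_def dist_Pair_Pair dist_real_def by (simp add: power2_eq_square)

lemma dist_dpt: "dist (dpt u) (dpt v) = sqrt (real_of_int ((fst u - fst v)*(fst u - fst v) + (snd u - snd v)*(snd u - snd v)))"
  unfolding dpt_def dist_Pair_Pair dist_real_def by (simp add: power2_eq_square algebra_simps)

lemma sqrt_eq_int: "sqrt (real_of_int z) = real k \<longleftrightarrow> z = int (k*k)" for z :: int
proof
  assume h: "sqrt (real_of_int z) = real k"
  then have "0 \<le> sqrt (real_of_int z)" by simp
  then have z0: "0 \<le> real_of_int z" by simp
  have "real_of_int z = (sqrt (real_of_int z))^2" using z0 by simp
  then have "real_of_int z = real k * real k" using h by (simp add: power2_eq_square)
  then show "z = int (k*k)" by (metis of_int_eq_iff of_int_of_nat_eq of_nat_mult)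
next
  assume "z = int (k*k)"
  then show "sqrt (real_of_int z) = real k" by (simp add: real_sqrt_mult_self)
qed

lemma G_edge_adj: "G_edge {u,v} \<longleftrightarrow> adj u v"
proof -
  have "G_edge {u,v} \<longleftrightarrow> dist (gpt u) (gpt v) = 1"
    unfolding G_edge_def
  proof
    assume "\<exists>u' v'. {u, v} = {u', v'} \<and> dist (gpt u') (gpt v') = 1"
    then show "dist (gpt u) (gpt v) = 1" by (auto simp: doubleton_eq_iff dist_commute)
  next
    assume "dist (gpt u) (gpt v) = 1"
    then show "\<exists>u' v'. {u, v} = {u', v'} \<and> dist (gpt u') (gpt v') = 1" by blast
  qed
  also have "\<dots> \<longleftrightarrow> sqrt (real_of_int ((fst u - fst v)*(fst u - fst v) + (snd u - snd v)*(snd u - snd v))) = real 1"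
    by (simp only: dist_gpt of_nat_1)
  also have "\<dots> \<longleftrightarrow> (fst u - fst v)*(fst u - fst v) + (snd u - snd v)*(snd u - snd v) = int (1*1)"
    by (rule sqrt_eq_int)
  also have "\<dots> \<longleftrightarrow> adj u v" using int_sq1[of "fst u - fst v" "snd u - snd v"] unfolding adj_def by (auto simp: abs_minus_commute)
  finally show ?thesis .
qed



definition dh :: "int \<Rightarrow> int \<Rightarrow> pt set" where "dh c d = {(c,d),(c+2,d)}"
definition dv :: "int \<Rightarrow> int \<Rightarrow> pt set" where "dv c d = {(c,d),(c,d+2)}"

lemma dist_dpt_eq2: "dist (dpt p) (dpt q) = 2 \<longleftrightarrow>
   (\<bar>fst p - fst q\<bar> = 2 \<and> snd p = snd q) \<or> (fst p = fst q \<and> \<bar>snd p - snd q\<bar> = 2)"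
proof -
  have "dist (dpt p) (dpt q) = 2 \<longleftrightarrow> sqrt (real_of_int ((fst p - fst q)*(fst p - fst q) + (snd p - snd q)*(snd p - snd q))) = real 2"
    by (simp only: dist_dpt) simp
  also have "\<dots> \<longleftrightarrow> (fst p - fst q)*(fst p - fst q) + (snd p - snd q)*(snd p - snd q) = int (2*2)"
    by (rule sqrt_eq_int)
  also have "\<dots> \<longleftrightarrow> (\<bar>fst p - fst q\<bar> = 2 \<and> snd p = snd q) \<or> (fst p = fst q \<and> \<bar>snd p - snd q\<bar> = 2)"
    using int_sq4[of "fst p - fst q" "snd p - snd q"] by auto
  finally show ?thesis .
qed

lemma Ledge_shape:
  assumes "f = {p,q}" "dist (dpt p) (dpt q) = 2" "even (fst p + snd p)"
  shows "\<exists>c d. even (c+d) \<and> (f = dh c d \<or> f = dv c d)"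
proof -
  obtain a b where p: "p = (a,b)" by (cases p)
  obtain a' b' where q: "q = (a',b')" by (cases q)
  have e: "even (a+b)" using assms p by simp
  have h: "(\<bar>a - a'\<bar> = 2 \<and> b = b') \<or> (a = a' \<and> \<bar>b - b'\<bar> = 2)"
    using assms(2) unfolding dist_dpt_eq2 p q by simp
  have "(a' = a + 2 \<and> b' = b) \<or> (a' = a - 2 \<and> b' = b) \<or> (a' = a \<and> b' = b + 2) \<or> (a' = a \<and> b' = b - 2)"
    using h by linarith
  then consider "a' = a + 2" "b' = b" | "a' = a - 2" "b' = b" | "a' = a" "b' = b + 2" | "a' = a" "b' = b - 2"
    by blast
  then show ?thesis
  proof cases
    case 1
    have "f = dh a b" using 1 assms(1) p q by (simp add: dh_def)
    then show ?thesis using e by blast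
  next
    case 2
    have "f = dh (a-2) b" using 2 assms(1) p q by (simp add: dh_def insert_commute)
    moreover have "even ((a-2)+b)" using e by simp
    ultimately show ?thesis by blast
  next
    case 3
    have "f = dv a b" using 3 assms(1) p q by (simp add: dv_def)
    then show ?thesis using e by blast
  next
    case 4
    have "f = dv a (b-2)" using 4 assms(1) p q by (simp add: dv_def insert_commute)
    moreover have "even (a+(b-2))" using e by simp
    ultimately show ?thesis by blast
  qed
qed

lemma dual_edge_iff: "dual_edge f \<longleftrightarrow> (\<exists>c d. even (c+d) \<and> (f = dh c d \<or> f = dv c d))"
proof
  assume "dual_edge f"
  then show "\<exists>c d. even (c+d) \<and> (f = dh c d \<or> f = dv c d)"
    unfolding dual_edge_def L1_edge_def L2_edge_def L1_vert_def L2_vert_def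
  proof (elim disjE exE conjE)
    fix p q assume "f = {p,q}" "even (fst p)" "even (snd p)" "dist (dpt p) (dpt q) = 2"
    then show ?thesis by (intro Ledge_shape) auto
  next
    fix p q assume "f = {p,q}" "odd (fst p)" "odd (snd p)" "dist (dpt p) (dpt q) = 2"
    then show ?thesis by (intro Ledge_shape) auto
  qed
next
  assume "\<exists>c d. even (c+d) \<and> (f = dh c d \<or> f = dv c d)"
  then obtain c d where cd: "even (c+d)" "f = dh c d \<or> f = dv c d" by blast
  have pd: "dual_edge f" if "f = {p,q}" "dist (dpt p) (dpt q) = 2" "even (fst p + snd p)" "even (fst p - fst q)" "even (snd p - snd q)" for p q
  proof (cases "even (fst p)")
    case True
    then have "L1_edge f" unfolding L1_edge_def L1_vert_def using that
      by (intro exI[of _ p] exI[of _ q]) (use that in \<open>auto simp: even_add\<close>)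
    then show ?thesis by (simp add: dual_edge_def)
  next
    case False
    then have "L2_edge f" unfolding L2_edge_def L2_vert_def using that
      by (intro exI[of _ p] exI[of _ q]) (use that in \<open>auto simp: even_add\<close>)
    then show ?thesis by (simp add: dual_edge_def)
  qed
  from cd(2) show "dual_edge f"
  proof
    assume "f = dh c d"
    then show ?thesis by (intro pd[of "(c,d)" "(c+2,d)"]) (use cd(1) in \<open>auto simp: dh_def dist_dpt_eq2\<close>)
  next
    assume "f = dv c d"
    then show ?thesis by (intro pd[of "(c,d)" "(c,d+2)"]) (use cd(1) in \<open>auto simp: dv_def dist_dpt_eq2\<close>)
  qed
qed

lemma dh_inj: "dh c d = dh c' d' \<longleftrightarrow> c = c' \<and> d = d'" by (auto simp: dh_def doubleton_eq_iff)
lemma dv_inj: "dv c d = dv c' d' \<longleftrightarrow> c = c' \<and> d = d'" by (auto simp: dv_def doubleton_eq_iff)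
lemma dh_dv: "dh c d \<noteq> dv c' d'" by (auto simp: dh_def dv_def doubleton_eq_iff)



lemma seg_pair: "z \<in> closed_segment (x1,y1) (x2,y2) \<longleftrightarrow>
   (\<exists>u. 0 \<le> u \<and> u \<le> 1 \<and> fst z = (1-u)*x1 + u*x2 \<and> snd z = (1-u)*y1 + u*y2)"
  for x1 y1 x2 y2 :: real
  unfolding closed_segment_def by (cases z) (auto simp: prod_eq_iff)

lemma seg_real: "t \<in> closed_segment x1 x2 \<longleftrightarrow> (\<exists>u. 0 \<le> u \<and> u \<le> 1 \<and> t = (1-u)*x1 + u*x2)"
  for x1 x2 t :: real
  unfolding closed_segment_def by auto

lemma seg_h: fixes x1 x2 y :: real assumes "x1 \<le> x2"
  shows "closed_segment (x1,y) (x2,y) = {z. snd z = y \<and> x1 \<le> fst z \<and> fst z \<le> x2}"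
proof -
  have "z \<in> closed_segment (x1,y) (x2,y) \<longleftrightarrow> snd z = y \<and> fst z \<in> closed_segment x1 x2" for z
    unfolding seg_pair seg_real by (auto simp: algebra_simps)
  then show ?thesis using closed_segment_eq_real_ivl1[OF assms] by auto
qed

lemma seg_v: fixes y1 y2 x :: real assumes "y1 \<le> y2"
  shows "closed_segment (x,y1) (x,y2) = {z. fst z = x \<and> y1 \<le> snd z \<and> snd z \<le> y2}"
proof -
  have "z \<in> closed_segment (x,y1) (x,y2) \<longleftrightarrow> fst z = x \<and> snd z \<in> closed_segment y1 y2" for z
    unfolding seg_pair seg_real by (auto simp: algebra_simps)
  then show ?thesis using closed_segment_eq_real_ivl1[OF assms] by auto
qed

lemma gseg_Hor: "gseg (Hor a b) = {z. snd z = of_int b \<and> of_int a \<le> fst z \<and> fst z \<le> of_int a + 1}"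
  unfolding gseg_def Hor_def gpt_def by (simp add: segment_convex_hull[symmetric] seg_h)
lemma gseg_Ver: "gseg (Ver a b) = {z. fst z = of_int a \<and> of_int b \<le> snd z \<and> snd z \<le> of_int b + 1}"
  unfolding gseg_def Ver_def gpt_def by (simp add: segment_convex_hull[symmetric] seg_v)
lemma dseg_dh: "dseg (dh c d) = {z. snd z = of_int d + 1/2 \<and> of_int c - 1/2 \<le> fst z \<and> fst z \<le> of_int c + 3/2}"
  unfolding dseg_def dh_def dpt_def by (auto simp: segment_convex_hull[symmetric] seg_h)
lemma dseg_dv: "dseg (dv c d) = {z. fst z = of_int c - 1/2 \<and> of_int d + 1/2 \<le> snd z \<and> snd z \<le> of_int d + 5/2}"
  unfolding dseg_def dv_def dpt_def by (auto simp: segment_convex_hull[symmetric] seg_v)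

lemma int_le_of_real: "real_of_int a < real_of_int c + 1 \<Longrightarrow> a \<le> c"
proof (rule ccontr)
  assume "real_of_int a < real_of_int c + 1" "\<not> a \<le> c"
  then have "c + 1 \<le> a" by simp
  then have "real_of_int (c+1) \<le> real_of_int a" by (simp only: of_int_le_iff)
  then show False using \<open>real_of_int a < real_of_int c + 1\<close> by simp
qed

lemma half_neq: "real_of_int a \<noteq> real_of_int c + 1/2"
proof
  assume "real_of_int a = real_of_int c + 1/2"
  then have "real_of_int (2*a) = real_of_int (2*c+1)" by simp
  then have "2*a = 2*c+1" by (simp only: of_int_eq_iff)
  then show False by presburger
qed

definition dualV :: "int \<Rightarrow> int \<Rightarrow> pt set" where
  "dualV a b = (if even (a+b) then dh a b else dh (a-1) b)"
definition dualH :: "int \<Rightarrow> int \<Rightarrow> pt set" where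
  "dualH a b = (if even (a+b) then dv (a+1) (b-1) else dv (a+1) (b-2))"

lemma I_Hdh: "gseg (Hor a b) \<inter> dseg (dh c d) = {}"
  unfolding gseg_Hor dseg_dh using half_neq by auto

lemma I_Vdv: "gseg (Ver a b) \<inter> dseg (dv c d) = {}"
  unfolding gseg_Ver dseg_dv using half_neq[of a "c-1"] by auto

lemma I_Hdv: "gseg (Hor a b) \<inter> dseg (dv c d) \<noteq> {} \<longleftrightarrow> c = a+1 \<and> (b = d+1 \<or> b = d+2)"
proof
  assume "gseg (Hor a b) \<inter> dseg (dv c d) \<noteq> {}"
  then obtain z :: "real \<times> real" where z: "snd z = of_int b" "of_int a \<le> fst z" "fst z \<le> of_int a + 1"
     "fst z = of_int c - 1/2" "of_int d + 1/2 \<le> snd z" "snd z \<le> of_int d + 5/2"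
    unfolding gseg_Hor dseg_dv by auto
  have "a+1 \<le> c" using int_le_of_real[of "a+1" c] z by simp
  moreover have "c \<le> a+1" using int_le_of_real[of c "a+1"] z by simp
  moreover have "d+1 \<le> b" using int_le_of_real[of "d+1" b] z by simp
  moreover have "b \<le> d+2" using int_le_of_real[of b "d+2"] z by simp
  ultimately show "c = a+1 \<and> (b = d+1 \<or> b = d+2)" by auto
next
  assume h: "c = a+1 \<and> (b = d+1 \<or> b = d+2)"
  then have "(of_int a + 1/2, of_int b) \<in> gseg (Hor a b) \<inter> dseg (dv c d)"
    unfolding gseg_Hor dseg_dv by auto
  then show "gseg (Hor a b) \<inter> dseg (dv c d) \<noteq> {}" by blast
qed

lemma I_Vdh: "gseg (Ver a b) \<inter> dseg (dh c d) \<noteq> {} \<longleftrightarrow> d = b \<and> (a = c \<or> a = c+1)"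
proof
  assume "gseg (Ver a b) \<inter> dseg (dh c d) \<noteq> {}"
  then obtain z where zz: "z \<in> gseg (Ver a b) \<inter> dseg (dh c d)" by blast
  then have z: "fst z = of_int a" "of_int b \<le> snd z" "snd z \<le> of_int b + 1"
     "snd z = of_int d + 1/2" "of_int c - 1/2 \<le> fst z" "fst z \<le> of_int c + 3/2"
    unfolding gseg_Ver dseg_dh by auto
  have "c \<le> a" using int_le_of_real[of c a] z by simp
  moreover have "a \<le> c+1" using int_le_of_real[of a "c+1"] z by simp
  moreover have "b \<le> d" using int_le_of_real[of b d] z by simp
  moreover have "d \<le> b" using int_le_of_real[of d b] z by simp
  ultimately show "d = b \<and> (a = c \<or> a = c+1)" by auto
next
  assume h: "d = b \<and> (a = c \<or> a = c+1)"
  then have "(of_int a, of_int b + 1/2) \<in> gseg (Ver a b) \<inter> dseg (dh c d)"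
    unfolding gseg_Ver dseg_dh by auto
  then show "gseg (Ver a b) \<inter> dseg (dh c d) \<noteq> {}" by blast
qed

lemma crossH: assumes "dual_edge f" shows "gseg (Hor a b) \<inter> dseg f \<noteq> {} \<longleftrightarrow> f = dualH a b"
proof -
  obtain c d where cd: "even (c+d)" "f = dh c d \<or> f = dv c d" using assms dual_edge_iff by blast
  from cd(2) show ?thesis
  proof
    assume f: "f = dh c d"
    then show ?thesis using I_Hdh dh_dv by (auto simp: dualH_def)
  next
    assume f: "f = dv c d"
    show ?thesis unfolding f I_Hdv dualH_def using cd(1) by (auto simp: dv_inj)
  qed
qed

lemma crossV: assumes "dual_edge f" shows "gseg (Ver a b) \<inter> dseg f \<noteq> {} \<longleftrightarrow> f = dualV a b"
proof -
  obtain c d where cd: "even (c+d)" "f = dh c d \<or> f = dv c d" using assms dual_edge_iff by blast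
  from cd(2) show ?thesis
  proof
    assume f: "f = dv c d"
    then show ?thesis using I_Vdv dh_dv by (auto simp: dualV_def) (metis dh_dv)+
  next
    assume f: "f = dh c d"
    show ?thesis unfolding f I_Vdh dualV_def using cd(1) by (auto simp: dh_inj)
  qed
qed



definition "hpres \<omega> m n \<longleftrightarrow> \<omega> (m,n+1) = \<omega> (m+1,n+1) \<and> \<omega> (m,n) = \<omega> (m+1,n) \<and> \<omega> (m,n+1) \<noteq> \<omega> (m,n)"
definition "vpres \<omega> m n \<longleftrightarrow> \<omega> (m,n) = \<omega> (m,n+1) \<and> \<omega> (m+1,n) = \<omega> (m+1,n+1) \<and> \<omega> (m,n) \<noteq> \<omega> (m+1,n)"

lemma mid_pair: "midpoint (x1::real, y1::real) (x2,y2) = ((x1+x2)/2, (y1+y2)/2)"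
  unfolding midpoint_def by simp

lemma dual_edge_dh: "dual_edge (dh c d) \<longleftrightarrow> even (c+d)"
  unfolding dual_edge_iff using dh_inj dh_dv by metis
lemma dual_edge_dv: "dual_edge (dv c d) \<longleftrightarrow> even (c+d)"
  unfolding dual_edge_iff using dv_inj dh_dv by metis

lemma of_int_half_eq: "real_of_int a + 1/2 = real_of_int b + 1/2 \<longleftrightarrow> a = b" by simp

lemma phi_dh: "phi \<omega> (dh c d) \<longleftrightarrow> even (c+d) \<and> hpres \<omega> c d"
proof -
  have mid: "midpoint (dpt p) (dpt q) = (of_int c + 1/2, of_int d + 1/2)" if "dh c d = {p,q}" for p q
  proof -
    have "(p = (c,d) \<and> q = (c+2,d)) \<or> (p = (c+2,d) \<and> q = (c,d))" using that by (auto simp: dh_def doubleton_eq_iff)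
    then show ?thesis by (auto simp: dpt_def mid_pair)
  qed
  have sq: "snd p = snd q \<and> fst p \<noteq> fst q" if "dh c d = {p,q}" for p q
    using that by (auto simp: dh_def doubleton_eq_iff)
  show ?thesis
  proof
    assume "phi \<omega> (dh c d)"
    then obtain p q m n where h: "dh c d = {p,q}" "black m n" "midpoint (dpt p) (dpt q) = (of_int m + 1/2, of_int n + 1/2)"
      "(snd p = snd q \<and> \<omega> (m, n + 1) = \<omega> (m + 1, n + 1) \<and> \<omega> (m, n) = \<omega> (m + 1, n) \<and> \<omega> (m, n + 1) \<noteq> \<omega> (m, n)) \<or>
       (fst p = fst q \<and> \<omega> (m, n) = \<omega> (m, n + 1) \<and> \<omega> (m + 1, n) = \<omega> (m + 1, n + 1) \<and> \<omega> (m, n) \<noteq> \<omega> (m + 1, n))"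
      and de: "dual_edge (dh c d)"
      unfolding phi_def by blast
    have "m = c" "n = d" using h(3) mid[OF h(1)] by auto
    then show "even (c+d) \<and> hpres \<omega> c d" using h(4) sq[OF h(1)] de dual_edge_dh by (auto simp: hpres_def)
  next
    assume a: "even (c+d) \<and> hpres \<omega> c d"
    show "phi \<omega> (dh c d)" unfolding phi_def
    proof (intro conjI exI)
      show "dual_edge (dh c d)" using a dual_edge_dh by simp
      show "dh c d = {(c,d),(c+2,d)}" by (simp add: dh_def)
      show "black c d" using a by (simp add: black_def)
      show "midpoint (dpt (c,d)) (dpt (c+2,d)) = (of_int c + 1/2, of_int d + 1/2)" by (rule mid) (simp add: dh_def)
      show "(snd (c,d) = snd (c+2,d) \<and> \<omega> (c, d + 1) = \<omega> (c + 1, d + 1) \<and> \<omega> (c, d) = \<omega> (c + 1, d) \<and> \<omega> (c, d + 1) \<noteq> \<omega> (c, d)) \<or>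
       (fst (c,d) = fst (c+2,d) \<and> \<omega> (c, d) = \<omega> (c, d + 1) \<and> \<omega> (c + 1, d) = \<omega> (c + 1, d + 1) \<and> \<omega> (c, d) \<noteq> \<omega> (c + 1, d))"
        using a unfolding hpres_def by (metis snd_conv)
    qed
  qed
qed

lemma phi_dv: "phi \<omega> (dv c d) \<longleftrightarrow> even (c+d) \<and> vpres \<omega> (c-1) (d+1)"
proof -
  have mid: "midpoint (dpt p) (dpt q) = (of_int (c-1) + 1/2, of_int (d+1) + 1/2)" if "dv c d = {p,q}" for p q
  proof -
    have "(p = (c,d) \<and> q = (c,d+2)) \<or> (p = (c,d+2) \<and> q = (c,d))" using that by (auto simp: dv_def doubleton_eq_iff)
    then show ?thesis by (auto simp: dpt_def mid_pair)
  qed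
  have sq: "fst p = fst q \<and> snd p \<noteq> snd q" if "dv c d = {p,q}" for p q
    using that by (auto simp: dv_def doubleton_eq_iff)
  show ?thesis
  proof
    assume "phi \<omega> (dv c d)"
    then obtain p q m n where h: "dv c d = {p,q}" "black m n" "midpoint (dpt p) (dpt q) = (of_int m + 1/2, of_int n + 1/2)"
      "(snd p = snd q \<and> \<omega> (m, n + 1) = \<omega> (m + 1, n + 1) \<and> \<omega> (m, n) = \<omega> (m + 1, n) \<and> \<omega> (m, n + 1) \<noteq> \<omega> (m, n)) \<or>
       (fst p = fst q \<and> \<omega> (m, n) = \<omega> (m, n + 1) \<and> \<omega> (m + 1, n) = \<omega> (m + 1, n + 1) \<and> \<omega> (m, n) \<noteq> \<omega> (m + 1, n))"
      and de: "dual_edge (dv c d)"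
      unfolding phi_def by blast
    have "real_of_int m + 1/2 = real_of_int (c-1) + 1/2" "real_of_int n + 1/2 = real_of_int (d+1) + 1/2"
      using h(3) mid[OF h(1)] by auto
    then have "m = c-1" "n = d+1" by (simp_all only: of_int_half_eq)
    then show "even (c+d) \<and> vpres \<omega> (c-1) (d+1)" using h(4) sq[OF h(1)] de dual_edge_dv by (auto simp: vpres_def)
  next
    assume a: "even (c+d) \<and> vpres \<omega> (c-1) (d+1)"
    show "phi \<omega> (dv c d)" unfolding phi_def
    proof (intro conjI exI)
      show "dual_edge (dv c d)" using a dual_edge_dv by simp
      show "dv c d = {(c,d),(c,d+2)}" by (simp add: dv_def)
      show "black (c-1) (d+1)" using a by (simp add: black_def)
      show "midpoint (dpt (c,d)) (dpt (c,d+2)) = (of_int (c-1) + 1/2, of_int (d+1) + 1/2)" by (rule mid) (simp add: dv_def)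
      show "(snd (c,d) = snd (c,d+2) \<and> \<omega> (c-1, d+1 + 1) = \<omega> (c-1 + 1, d+1 + 1) \<and> \<omega> (c-1, d+1) = \<omega> (c-1 + 1, d+1) \<and> \<omega> (c-1, d+1 + 1) \<noteq> \<omega> (c-1, d+1)) \<or>
       (fst (c,d) = fst (c,d+2) \<and> \<omega> (c-1, d+1) = \<omega> (c-1, d+1 + 1) \<and> \<omega> (c-1 + 1, d+1) = \<omega> (c-1 + 1, d+1 + 1) \<and> \<omega> (c-1, d+1) \<noteq> \<omega> (c-1 + 1, d+1))"
        using a unfolding vpres_def by (metis fst_conv)
    qed
  qed
qed

lemma Om:
  assumes "\<omega> \<in> Omega" "black m n"
  shows "hpres \<omega> m n \<longleftrightarrow> \<omega> (m,n) \<noteq> \<omega> (m,n+1)" "hpres \<omega> m n \<longleftrightarrow> \<omega> (m+1,n) \<noteq> \<omega> (m+1,n+1)"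
        "vpres \<omega> m n \<longleftrightarrow> \<omega> (m,n) \<noteq> \<omega> (m+1,n)" "vpres \<omega> m n \<longleftrightarrow> \<omega> (m,n+1) \<noteq> \<omega> (m+1,n+1)"
  using assms unfolding Omega_def hpres_def vpres_def by auto

lemma phi_dualV: assumes "\<omega> \<in> Omega" shows "phi \<omega> (dualV a b) \<longleftrightarrow> \<omega> (a,b) \<noteq> \<omega> (a,b+1)"
proof (cases "even (a+b)")
  case True
  then show ?thesis using Om(1)[OF assms, of a b] by (simp add: dualV_def phi_dh black_def)
next
  case False
  then have e: "even (a - 1 + b)" by simp
  show ?thesis using False e Om(2)[OF assms, of "a-1" b] by (simp add: dualV_def phi_dh black_def)
qed

lemma phi_dualH: assumes "\<omega> \<in> Omega" shows "phi \<omega> (dualH a b) \<longleftrightarrow> \<omega> (a,b) \<noteq> \<omega> (a+1,b)"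
proof (cases "even (a+b)")
  case True
  then have e: "even (a + 1 + (b - 1))" by simp
  show ?thesis using True e Om(3)[OF assms, of a b] by (simp add: dualH_def phi_dv black_def)
next
  case False
  then have e: "even (a + 1 + (b - 2))" "even (a + (b - 1))" by simp_all
  show ?thesis using False e Om(4)[OF assms, of a "b-1"] by (simp add: dualH_def phi_dv black_def)
qed



lemma Hor_inj: "Hor a b = Hor a' b' \<longleftrightarrow> a = a' \<and> b = b'" by (auto simp: Hor_def doubleton_eq_iff)
lemma Ver_inj: "Ver a b = Ver a' b' \<longleftrightarrow> a = a' \<and> b = b'" by (auto simp: Ver_def doubleton_eq_iff)
lemma Hor_Ver: "Hor a b \<noteq> Ver a' b'" by (auto simp: Hor_def Ver_def doubleton_eq_iff)

definition cr :: "pt set \<Rightarrow> pt set set" where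
  "cr f = {Hor a b |a b. dualH a b = f} \<union> {Ver a b |a b. dualV a b = f}"

lemma cr_unique: "s \<in> cr f \<Longrightarrow> s \<in> cr f' \<Longrightarrow> f = f'"
  unfolding cr_def using Hor_inj Ver_inj Hor_Ver by auto (metis Hor_Ver)+

lemma dualV_dh: "dualV a b = dh c d \<Longrightarrow> Ver a b \<in> sides c d"
  unfolding dualV_def sides_def by (auto simp: dh_inj split: if_splits)
lemma dualH_dv: "dualH a b = dv c d \<Longrightarrow> Hor a b \<in> sides (c-1) (d+1)"
  unfolding dualH_def sides_def by (auto simp: dv_inj split: if_splits)
lemma dualV_dv: "dualV a b \<noteq> dv c d" unfolding dualV_def using dh_dv by auto
lemma dualH_dh: "dualH a b \<noteq> dh c d" unfolding dualH_def using dh_dv by (auto) (metis dh_dv)+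

lemma cr_face: "dual_edge f \<Longrightarrow> \<exists>m n. cr f \<subseteq> sides m n"
proof -
  assume "dual_edge f"
  then obtain c d where cd: "f = dh c d \<or> f = dv c d" using dual_edge_iff by blast
  then show ?thesis
  proof
    assume f: "f = dh c d"
    have "cr f \<subseteq> sides c d" unfolding cr_def f using dualV_dh dualH_dh by auto
    then show ?thesis by blast
  next
    assume f: "f = dv c d"
    have "cr f \<subseteq> sides (c-1) (d+1)" unfolding cr_def f using dualH_dv dualV_dv by auto
    then show ?thesis by blast
  qed
qed

lemma cr_white: assumes "dual_edge f" "p \<in> f" shows "\<exists>s\<in>cr f. s \<in> sides (fst p - 1) (snd p)"
proof -
  obtain c d where cd: "even (c+d)" "f = dh c d \<or> f = dv c d" using assms(1) dual_edge_iff by blast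
  from cd(2) show ?thesis
  proof
    assume f: "f = dh c d"
    then have "p = (c,d) \<or> p = (c+2,d)" using assms(2) by (auto simp: dh_def)
    then show ?thesis
    proof
      assume p: "p = (c,d)"
      have "Ver c d \<in> cr f" unfolding cr_def f dualV_def using cd(1) by auto
      moreover have "Ver c d \<in> sides (fst p - 1) (snd p)" using p by (simp add: sides_def)
      ultimately show ?thesis by blast
    next
      assume p: "p = (c+2,d)"
      have "dualV (c+1) d = dh c d" unfolding dualV_def using cd(1) by auto
      then have "Ver (c+1) d \<in> cr f" unfolding cr_def f by auto
      moreover have "Ver (c+1) d \<in> sides (fst p - 1) (snd p)" using p by (simp add: sides_def add.commute)
      ultimately show ?thesis by blast
    qed
  next
    assume f: "f = dv c d"
    then have "p = (c,d) \<or> p = (c,d+2)" using assms(2) by (auto simp: dv_def)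
    then show ?thesis
    proof
      assume p: "p = (c,d)"
      have "dualH (c-1) (d+1) = dv c d" unfolding dualH_def using cd(1) by auto
      then have "Hor (c-1) (d+1) \<in> cr f" unfolding cr_def f by auto
      moreover have "Hor (c-1) (d+1) \<in> sides (fst p - 1) (snd p)" using p by (simp add: sides_def)
      ultimately show ?thesis by blast
    next
      assume p: "p = (c,d+2)"
      have "dualH (c-1) (d+2) = dv c d" unfolding dualH_def using cd(1) by auto
      then have "Hor (c-1) (d+2) \<in> cr f" unfolding cr_def f by auto
      moreover have "Hor (c-1) (d+2) \<in> sides (fst p - 1) (snd p)" using p by (simp add: sides_def)
      ultimately show ?thesis by blast
    qed
  qed
qed

lemma adj_edge_cases: assumes "adj u v" shows "\<exists>a b. {u,v} = Hor a b \<or> {u,v} = Ver a b"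
proof -
  obtain p q where u: "u = (p,q)" by (cases u)
  from adj_cases[OF assms] u consider "v = (p+1,q)" | "v = (p-1,q)" | "v = (p,q+1)" | "v = (p,q-1)" by auto
  then show ?thesis
  proof cases
    case 1 then show ?thesis using u by (auto simp: Hor_def)
  next
    case 2 then have "{u,v} = Hor (p-1) q" using u by (auto simp: Hor_def)
    then show ?thesis by blast
  next
    case 3 then show ?thesis using u by (auto simp: Ver_def)
  next
    case 4 then have "{u,v} = Ver p (q-1)" using u by (auto simp: Ver_def)
    then show ?thesis by blast
  qed
qed

lemma sides_cases: "s \<in> sides m n \<Longrightarrow> s \<in> cr (dualH m n) \<or> s \<in> cr (dualH m (n+1)) \<or> s \<in> cr (dualV m n) \<or> s \<in> cr (dualV (m+1) n)"
  unfolding sides_def cr_def by auto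

lemma black_duals: "even (m+n) \<Longrightarrow> dualH m n = dv (m+1) (n-1) \<and> dualH m (n+1) = dv (m+1) (n-1) \<and> dualV m n = dh m n \<and> dualV (m+1) n = dh m n"
  unfolding dualH_def dualV_def by auto

lemma white_duals: "odd (m+n) \<Longrightarrow> (m+1,n) \<in> dualH m n \<and> (m+1,n) \<in> dualH m (n+1) \<and> (m+1,n) \<in> dualV m n \<and> (m+1,n) \<in> dualV (m+1) n"
  unfolding dualH_def dualV_def dh_def dv_def by auto



definition "Xof C = {e. \<exists>u v. e = {u,v} \<and> adj u v \<and> (\<exists>f\<in>C. gseg e \<inter> dseg f \<noteq> {})}"

locale setting =
  fixes \<omega> :: "pt \<Rightarrow> bool" and C :: "pt set set"
  assumes om: "\<omega> \<in> Omega" and cont: "is_contour \<omega> C" and Cinf: "infinite C"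
begin

abbreviation "X \<equiv> Xof C"

lemma C_def': "\<exists>g0. phi \<omega> g0 \<and> C = {f. (dual_adj \<omega>)\<^sup>*\<^sup>* g0 f}" using cont by (simp add: is_contour_def)

lemma C_phi: "f \<in> C \<Longrightarrow> phi \<omega> f"
proof -
  obtain g0 where g: "phi \<omega> g0" "C = {f. (dual_adj \<omega>)\<^sup>*\<^sup>* g0 f}" using C_def' by blast
  assume "f \<in> C"
  then have "(dual_adj \<omega>)\<^sup>*\<^sup>* g0 f" using g by simp
  then show ?thesis by induct (auto simp: g dual_adj_def)
qed

lemma C_closed: "f \<in> C \<Longrightarrow> dual_adj \<omega> f g \<Longrightarrow> g \<in> C"
  using C_def' by (auto intro: rtranclp.rtrancl_into_rtrancl)

lemma C_de: "f \<in> C \<Longrightarrow> dual_edge f" using C_phi by (simp add: phi_def)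

lemma X_iff: "e \<in> X \<longleftrightarrow> (\<exists>f\<in>C. e \<in> cr f)"
proof
  assume "e \<in> X"
  then obtain u v f where h: "e = {u,v}" "adj u v" "f \<in> C" "gseg e \<inter> dseg f \<noteq> {}" unfolding Xof_def by blast
  obtain a b where "e = Hor a b \<or> e = Ver a b" using adj_edge_cases[OF h(2)] h(1) by blast
  then show "\<exists>f\<in>C. e \<in> cr f"
  proof
    assume e: "e = Hor a b"
    then have "f = dualH a b" using crossH[OF C_de[OF h(3)]] h(4) by simp
    then show ?thesis using h(3) e unfolding cr_def by blast
  next
    assume e: "e = Ver a b"
    then have "f = dualV a b" using crossV[OF C_de[OF h(3)]] h(4) by simp
    then show ?thesis using h(3) e unfolding cr_def by blast
  qed
next
  assume "\<exists>f\<in>C. e \<in> cr f"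
  then obtain f where f: "f \<in> C" "e \<in> cr f" by blast
  then consider a b where "e = Hor a b" "dualH a b = f" | a b where "e = Ver a b" "dualV a b = f"
    unfolding cr_def by blast
  then show "e \<in> X"
  proof cases
    case 1
    then have "gseg e \<inter> dseg f \<noteq> {}" using crossH[OF C_de[OF f(1)]] by simp
    moreover have "e = {(a,b),(a+1,b)}" "adj (a,b) (a+1,b)" using 1 by (auto simp: Hor_def adj_def)
    ultimately show ?thesis unfolding Xof_def using f(1) by blast
  next
    case 2
    then have "gseg e \<inter> dseg f \<noteq> {}" using crossV[OF C_de[OF f(1)]] by simp
    moreover have "e = {(a,b),(a,b+1)}" "adj (a,b) (a,b+1)" using 2 by (auto simp: Ver_def adj_def)
    ultimately show ?thesis unfolding Xof_def using f(1) by blast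
  qed
qed

lemma disag: "s \<in> cr f \<Longrightarrow> s = {u,v} \<Longrightarrow> (\<omega> u \<noteq> \<omega> v \<longleftrightarrow> phi \<omega> f)"
  unfolding cr_def using phi_dualH[OF om] phi_dualV[OF om]
  by (auto simp: Hor_def Ver_def doubleton_eq_iff)

lemma A0': "e \<in> X \<Longrightarrow> \<exists>u v. e = {u,v} \<and> adj u v" unfolding Xof_def by blast

lemma A1': "{u,v} \<in> X \<Longrightarrow> \<omega> u \<noteq> \<omega> v"
  using X_iff disag C_phi by blast

lemma A2': assumes e: "e \<in> X" "e \<in> sides m n" and s: "{u,v} \<in> sides m n" "\<omega> u \<noteq> \<omega> v" shows "{u,v} \<in> X"
proof -
  obtain fe where fe: "fe \<in> C" "e \<in> cr fe" using e X_iff by blast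
  let ?D = "{dualH m n, dualH m (n+1), dualV m n, dualV (m+1) n}"
  have feD: "fe \<in> ?D" using sides_cases[OF e(2)] cr_unique fe(2) by blast
  obtain fs where fs: "fs \<in> ?D" "{u,v} \<in> cr fs" using sides_cases[OF s(1)] by blast
  have pfs: "phi \<omega> fs" using disag[OF fs(2)] s(2) by simp
  have pfe: "phi \<omega> fe" using C_phi fe(1) by simp
  show ?thesis
  proof (cases "even (m+n)")
    case True
    note bd = black_duals[OF True]
    show ?thesis
    proof (cases "fs = fe")
      case True then show ?thesis using X_iff fe fs by blast
    next
      case False
      then have "phi \<omega> (dh m n) \<and> phi \<omega> (dv (m+1) (n-1))" using feD fs(1) pfs pfe bd by auto
      then have "hpres \<omega> m n \<and> vpres \<omega> m n" by (simp add: phi_dh phi_dv)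
      then show ?thesis by (auto simp: hpres_def vpres_def)
    qed
  next
    case False
    note wd = white_duals[OF False]
    have "(m+1,n) \<in> fe" "(m+1,n) \<in> fs" using wd feD fs(1) by auto
    then have "dual_adj \<omega> fe fs" using pfe pfs by (auto simp: dual_adj_def)
    then have "fs \<in> C" using C_closed fe(1) by blast
    then show ?thesis using X_iff fs by blast
  qed
qed

lemma A3': assumes "e0 \<in> X" "Q e0"
  and step: "\<And>m n e e'. e \<in> sides m n \<Longrightarrow> e' \<in> sides m n \<Longrightarrow> e \<in> X \<Longrightarrow> e' \<in> X \<Longrightarrow> Q e \<Longrightarrow> Q e'"
  and "e \<in> X" shows "Q e"
proof -
  let ?R = "dual_adj \<omega>"
  have symR: "?R a b \<Longrightarrow> ?R b a" for a b by (auto simp: dual_adj_def)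
  obtain g0 where g: "phi \<omega> g0" "C = {f. ?R\<^sup>*\<^sup>* g0 f}" using C_def' by blast
  obtain f0 where f0: "f0 \<in> C" "e0 \<in> cr f0" using assms(1) X_iff by blast
  have crX: "s \<in> cr f \<Longrightarrow> f \<in> C \<Longrightarrow> s \<in> X" for s f using X_iff by blast
  have crQ: "Q s'" if h: "f \<in> C" "s \<in> cr f" "s' \<in> cr f" "Q s" for f s s'
  proof -
    obtain m n where "cr f \<subseteq> sides m n" using cr_face[OF C_de[OF h(1)]] by blast
    then show ?thesis using step[of s m n s'] h crX by blast
  qed
  have main: "?R\<^sup>*\<^sup>* f0 f \<Longrightarrow> f \<in> C \<and> (\<forall>s\<in>cr f. Q s)" for f
  proof (induct rule: rtranclp_induct)
    case base then show ?case using f0 crQ assms(2) by blast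
  next
    case (step f f')
    have f'C: "f' \<in> C" using C_closed step by blast
    obtain p where p: "p \<in> f" "p \<in> f'" using step(2) by (auto simp: dual_adj_def)
    obtain s1 where s1: "s1 \<in> cr f" "s1 \<in> sides (fst p - 1) (snd p)" using cr_white[OF C_de p(1)] step by blast
    obtain s2 where s2: "s2 \<in> cr f'" "s2 \<in> sides (fst p - 1) (snd p)" using cr_white[OF C_de[OF f'C] p(2)] by blast
    have "Q s1" using step s1 by blast
    moreover have "s1 \<in> X" using crX s1(1) step(3) by blast
    moreover have "s2 \<in> X" using crX s2(1) f'C by blast
    ultimately have "Q s2" using assms(3)[of s1 "fst p - 1" "snd p" s2] s1(2) s2(2) by blast
    then show ?case using crQ[OF f'C s2(1)] f'C by blast
  qed
  obtain f where f: "f \<in> C" "e \<in> cr f" using assms(4) X_iff by blast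
  have "?R\<^sup>*\<^sup>* g0 f0" "?R\<^sup>*\<^sup>* g0 f" using f0 f g by auto
  then have "?R\<^sup>*\<^sup>* f0 f" using rtranclp_sym_rel[of ?R] symR by (meson rtranclp_trans)
  then show ?thesis using main f by blast
qed

end


lemma half_int_bound: "\<bar>real_of_int k - 1/2\<bar> \<ge> 1/2"
proof -
  have "k \<ge> 1 \<or> k \<le> 0" by linarith
  then have "real_of_int k \<ge> 1 \<or> real_of_int k \<le> 0" by (metis of_int_1_le_iff of_int_le_0_iff)
  then show ?thesis by linarith
qed

lemma LB: assumes "dual_edge f" "z \<in> dseg f" shows "1/2 \<le> dist (gpt x) z"
proof -
  obtain c d where cd: "f = dh c d \<or> f = dv c d" using assms(1) dual_edge_iff by blast
  then show ?thesis
  proof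
    assume f: "f = dh c d"
    then have "snd z = of_int d + 1/2" using assms(2) dseg_dh by auto
    then have "dist (snd (gpt x)) (snd z) = \<bar>real_of_int (snd x - d) - 1/2\<bar>"
      by (simp add: gpt_def dist_real_def algebra_simps)
    then have "1/2 \<le> dist (snd (gpt x)) (snd z)" using half_int_bound[of "snd x - d"] by simp
    then show ?thesis using dist_snd_le[of "gpt x" z] by linarith
  next
    assume f: "f = dv c d"
    then have "fst z = of_int c - 1/2" using assms(2) dseg_dv by auto
    then have "dist (fst (gpt x)) (fst z) = \<bar>real_of_int (fst x - c) + 1/2\<bar>"
      by (simp add: gpt_def dist_real_def algebra_simps)
    also have "\<dots> = \<bar>real_of_int (c - fst x) - 1/2\<bar>" by (simp add: algebra_simps abs_minus_commute)
    finally have "1/2 \<le> dist (fst (gpt x)) (fst z)" using half_int_bound[of "c - fst x"] by simp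
    then show ?thesis using dist_fst_le[of "gpt x" z] by linarith
  qed
qed

lemma adj_dist: "adj x y \<Longrightarrow> dist (gpt x) (gpt y) = 1"
  using G_edge_adj[of x y] unfolding G_edge_def by (auto simp: doubleton_eq_iff dist_commute)

lemma infd: assumes "adj x y" "dual_edge f" "gseg {x,y} \<inter> dseg f \<noteq> {}"
  shows "infdist (gpt x) (dseg f) = 1/2"
proof (rule antisym)
  obtain z where z: "z \<in> gseg {x,y}" "z \<in> dseg f" using assms(3) by blast
  have "z \<in> closed_segment (gpt x) (gpt y)" using z(1) unfolding gseg_def by (simp add: segment_convex_hull)
  then have "dist (gpt x) (gpt y) = dist (gpt x) z + dist z (gpt y)" using between between_mem_segment by blast
  moreover have "1/2 \<le> dist (gpt y) z" using LB[OF assms(2) z(2)] by simp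
  ultimately have "dist (gpt x) z \<le> 1/2" using adj_dist[OF assms(1)] by (simp add: dist_commute)
  then show "infdist (gpt x) (dseg f) \<le> 1/2" using infdist_le2[OF z(2)] by blast
next
  have ne: "dseg f \<noteq> {}" using assms(3) by blast
  show "1/2 \<le> infdist (gpt x) (dseg f)" unfolding infdist_notempty[OF ne]
    by (rule cINF_greatest[OF ne]) (rule LB[OF assms(2)])
qed

context setting begin

lemma X_inf: "infinite X"
proof
  assume fin: "finite X"
  define g where "g s = (SOME f. s \<in> cr f)" for s
  have "C \<subseteq> g ` X"
  proof
    fix f assume f: "f \<in> C"
    obtain p where p: "p \<in> f" using C_de[OF f] dual_edge_iff by (auto simp: dh_def dv_def)
    obtain s where s: "s \<in> cr f" using cr_white[OF C_de[OF f] p] by blast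
    have "s \<in> X" using X_iff f s by blast
    moreover have "g s = f" unfolding g_def using s cr_unique by (metis someI)
    ultimately show "f \<in> g ` X" by blast
  qed
  then have "finite C" using fin finite_surj by blast
  then show False using Cinf by simp
qed

lemma GC_eq: "GC_adj C = (\<lambda>u v. adj u v \<and> {u,v} \<notin> X)"
proof (intro ext)
  fix u v
  show "GC_adj C u v = (adj u v \<and> {u,v} \<notin> X)"
  proof (cases "adj u v")
    case True
    have "{u,v} \<in> X \<longleftrightarrow> (\<exists>f\<in>C. gseg {u,v} \<inter> dseg f \<noteq> {})" unfolding Xof_def using True by blast
    then show ?thesis unfolding GC_adj_def G_edge_adj using True by blast
  next
    case False then show ?thesis unfolding GC_adj_def G_edge_adj by simp
  qed
qed

end

theorem lemma2p7:
  fixes \<omega> :: "int \<times> int \<Rightarrow> bool"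
    and C :: "(int \<times> int) set set"
    and K :: "(int \<times> int) set"
  assumes "\<omega> \<in> Omega"
    and "is_contour \<omega> C" and "infinite C"
    and "is_GC_component C K" and "infinite K"
  shows "\<exists>Cl. is_cluster \<omega> Cl \<and> infinite Cl \<and> Cl \<subseteq> K \<and> incident Cl C"
proof -
  interpret st: setting \<omega> C using assms(1-3) by unfold_locales
  obtain v where K: "K = {w. (GC_adj C)\<^sup>*\<^sup>* v w}" using assms(4) by (auto simp: is_GC_component_def)
  have K': "K = {w. (\<lambda>u v. adj u v \<and> {u,v} \<notin> Xof C)\<^sup>*\<^sup>* v w}" using K st.GC_eq by simp
  interpret cc: core \<omega> "Xof C" v
  proof
    show "\<And>e. e \<in> Xof C \<Longrightarrow> \<exists>u v. e = {u, v} \<and> adj u v" by (rule st.A0')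
    show "\<And>u v. {u, v} \<in> Xof C \<Longrightarrow> \<omega> u \<noteq> \<omega> v" by (rule st.A1')
    show "\<And>e m n u v. e \<in> Xof C \<Longrightarrow> e \<in> sides m n \<Longrightarrow> {u, v} \<in> sides m n \<Longrightarrow> \<omega> u \<noteq> \<omega> v \<Longrightarrow> {u, v} \<in> Xof C"
      by (rule st.A2')
    show "\<And>e0 Q e. e0 \<in> Xof C \<Longrightarrow> Q e0 \<Longrightarrow> (\<And>m n e e'. e \<in> sides m n \<Longrightarrow> e' \<in> sides m n \<Longrightarrow> e \<in> Xof C \<Longrightarrow> e' \<in> Xof C \<Longrightarrow> Q e \<Longrightarrow> Q e')
       \<Longrightarrow> e \<in> Xof C \<Longrightarrow> Q e" by (rule st.A3')
    show "infinite (Xof C)" by (rule st.X_inf)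
    show "infinite {w. (\<lambda>u v. adj u v \<and> {u, v} \<notin> Xof C)\<^sup>*\<^sup>* v w}" using K' assms(5) by simp
  qed
  obtain x y where xy: "x \<in> cc.K" "{x,y} \<in> Xof C" "adj x y" "infinite {w. cc.sameA\<^sup>*\<^sup>* x w}"
    using cc.core_main by blast
  have KK: "cc.K = K" unfolding cc.K_def K' cc.GCX_def by simp
  have sa: "cc.sameA = same_adj \<omega>" by (intro ext) (simp add: cc.sameA_def same_adj_def G_edge_adj)
  define Cl where "Cl = {w. (same_adj \<omega>)\<^sup>*\<^sup>* x w}"
  have "is_cluster \<omega> Cl" unfolding is_cluster_def Cl_def by blast
  moreover have "infinite Cl" using xy(4) sa Cl_def by simp
  moreover have "Cl \<subseteq> K"
  proof
    fix w assume "w \<in> Cl"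
    then have "(same_adj \<omega>)\<^sup>*\<^sup>* x w" by (simp add: Cl_def)
    then show "w \<in> K"
    proof induct
      case base then show ?case using xy(1) KK by simp
    next
      case (step a b)
      have "adj a b" "\<omega> a = \<omega> b" using step(2) by (auto simp: same_adj_def G_edge_adj)
      then have "{a,b} \<notin> Xof C" using st.A1' by blast
      then show ?case using cc.K_closed[of a b] step(3) KK \<open>adj a b\<close> by simp
    qed
  qed
  moreover have "incident Cl C"
  proof -
    obtain f where f: "f \<in> C" "gseg {x,y} \<inter> dseg f \<noteq> {}" using xy(2) unfolding Xof_def by blast
    have "infdist (gpt x) (dseg f) = 1/2" by (rule infd[OF xy(3) st.C_de[OF f(1)] f(2)])
    moreover have "x \<in> Cl" by (simp add: Cl_def)
    ultimately show ?thesis unfolding incident_def using f(1) by blast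
  qed
  ultimately show ?thesis by blast
qed


end
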